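(* Let $\mathfrak{g}$ be a real Lie algebra of dimension $2n$ and let $J$ be a smooth point of $\mathcal{C}(\mathfrak{g})$. Then, under the identification $T_J\mathcal{C}\cong\mathrm{Hom}(\Lambda^{1,0},\Lambda^{0,1})$, the tangent space $T_J\mathcal{C}(\mathfrak{g})$ is contained in $K=\{\theta\in\mathrm{Hom}(\Lambda^{1,0},\Lambda^{0,1}):\bar\partial\theta=0\}$.
   Context: $\mathcal{C}$ is the set of almost-complex structures $J$ on $\mathfrak{g}$ ($J^2=-1$), and $\mathcal{C}(\mathfrak{g})$ the subset of integrable ones, i.e. satisfying $[JX,JY]=[X,Y]+J[JX,Y]+J[X,JY]$. Identifying $J$ with its space $\Lambda^{1,0}=\Lambda^{1,0}_J$ of $(1,0)$-forms (complex-linear $\omega$ with $\omega(JX)=i\omega(X)$), $\mathcal{C}$ is the open subset of the Grassmannian of complex $n$-dimensional subspaces $\Lambda\subseteq\mathfrak{g}^*_{\mathbb{C}}$ with $\Lambda\cap\overline{\Lambda}=\{0\}$. Tangent vectors are identified with $\mathrm{Hom}(\Lambda^{1,0},\Lambda^{0,1})$, $\Lambda^{0,1}=\overline{\Lambda^{1,0}}$: if $\{\omega^1,\dots,\omega^n\}$ is a basis of $\Lambda^{1,0}$ and $\tau^i(t)\in\Lambda^{1,0}$ are paths with $\tau^i(0)=0$, $\dot\tau^i(0)=\sigma^i$, the path $\Lambda_t=\langle\omega^1+\overline{\tau^1(t)},\dots,\omega^n+\overline{\tau^n(t)}\rangle$ has tangent vector $\theta\colon\omega^i\mapsto\overline{\sigma^i}$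 at $t=0$. With $d\alpha(X,Y)=-\alpha([X,Y])$ extended complex-linearly, and $J$ integrable, $d\Lambda^{1,0}\subseteq\Lambda^{2,0}\oplus\Lambda^{1,1}$; for $\omega\in\Lambda^{1,0}$, $\bar\partial\omega$ is the $(1,1)$-component of $d\omega$, and for $\beta\in\Lambda^{0,1}$, $\bar\partial\beta$ is the $(0,2)$-component of $d\beta$. For $\theta\in\mathrm{Hom}(\Lambda^{1,0},\Lambda^{0,1})$ define $\bar\partial\theta\in\mathrm{Hom}(\Lambda^{1,0},\Lambda^{0,2})$ by $(\bar\partial\theta)(\omega)=\bar\partial(\theta\omega)-\theta(\bar\partial\omega)$, where $\theta(\alpha\wedge\bar\beta)=\theta(\alpha)\wedge\bar\beta$ for $\alpha\in\Lambda^{1,0}$, $\bar\beta\in\Lambda^{0,1}$, extended linearly. *)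

theory Defs
  imports "HOL-Analysis.Analysis"
begin

definition lie_bracket :: "(real^'n \<Rightarrow> real^'n \<Rightarrow> real^'n) \<Rightarrow> bool" where
  "lie_bracket br \<longleftrightarrow>
     (\<forall>x. linear (br x)) \<and> (\<forall>y. linear (\<lambda>x. br x y)) \<and>
     (\<forall>x y. br x y = - br y x) \<and>
     (\<forall>x y z. br x (br y z) + br y (br z x) + br z (br x y) = 0)"

definition acs :: "(real^'n^'n) set" where
  "acs = {J. J ** J = - mat 1}"

definition integrable :: "(real^'n \<Rightarrow> real^'n \<Rightarrow> real^'n) \<Rightarrow> real^'n^'n \<Rightarrow> bool" where
  "integrable br J \<longleftrightarrow>
     (\<forall>X Y. br (J *v X) (J *v Y) = br X Y + J *v br (J *v X) Y + J *v br X (J *v Y))"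

definition Cg :: "(real^'n \<Rightarrow> real^'n \<Rightarrow> real^'n) \<Rightarrow> (real^'n^'n) set" where
  "Cg br = {J \<in> acs. integrable br J}"

text \<open>Complex-valued forms on g (= complex-linear forms on the complexification).
  1-forms: real-linear maps g \<Rightarrow> complex; 2-forms: maps g \<Rightarrow> g \<Rightarrow> complex.\<close>

type_synonym 'n form1 = "real^'n \<Rightarrow> complex"
type_synonym 'n form2 = "real^'n \<Rightarrow> real^'n \<Rightarrow> complex"

definition L10 :: "real^'n^'n \<Rightarrow> 'n form1 set" where
  "L10 J = {\<omega>. linear \<omega> \<and> (\<forall>x. \<omega> (J *v x) = \<i> * \<omega> x)}"

definition L01 :: "real^'n^'n \<Rightarrow> 'n form1 set" where
  "L01 J = {\<omega>. linear \<omega> \<and> (\<forall>x. \<omega> (J *v x) = - \<i> * \<omega> x)}"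

definition wedge :: "'n form1 \<Rightarrow> 'n form1 \<Rightarrow> 'n form2" where
  "wedge \<alpha> \<beta> = (\<lambda>X Y. \<alpha> X * \<beta> Y - \<alpha> Y * \<beta> X)"

definition sum_wedges :: "nat \<Rightarrow> (nat \<Rightarrow> 'n form1) \<Rightarrow> (nat \<Rightarrow> 'n form1) \<Rightarrow> 'n form2" where
  "sum_wedges m \<alpha> \<beta> = (\<lambda>X Y. \<Sum>k<m. wedge (\<alpha> k) (\<beta> k) X Y)"

definition L20 :: "real^'n^'n \<Rightarrow> 'n form2 set" where
  "L20 J = {sum_wedges m \<alpha> \<beta> | m \<alpha> \<beta>. \<forall>k<m. \<alpha> k \<in> L10 J \<and> \<beta> k \<in> L10 J}"

definition L11 :: "real^'n^'n \<Rightarrow> 'n form2 set" where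
  "L11 J = {sum_wedges m \<alpha> \<beta> | m \<alpha> \<beta>. \<forall>k<m. \<alpha> k \<in> L10 J \<and> \<beta> k \<in> L01 J}"

definition L02 :: "real^'n^'n \<Rightarrow> 'n form2 set" where
  "L02 J = {sum_wedges m \<alpha> \<beta> | m \<alpha> \<beta>. \<forall>k<m. \<alpha> k \<in> L01 J \<and> \<beta> k \<in> L01 J}"

definition comp11 :: "real^'n^'n \<Rightarrow> 'n form2 \<Rightarrow> 'n form2" where
  "comp11 J \<gamma> = (THE b. \<exists>a c. a \<in> L20 J \<and> b \<in> L11 J \<and> c \<in> L02 J \<and>
                          \<gamma> = (\<lambda>X Y. a X Y + b X Y + c X Y))"

definition comp02 :: "real^'n^'n \<Rightarrow> 'n form2 \<Rightarrow> 'n form2" where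
  "comp02 J \<gamma> = (THE c. \<exists>a b. a \<in> L20 J \<and> b \<in> L11 J \<and> c \<in> L02 J \<and>
                          \<gamma> = (\<lambda>X Y. a X Y + b X Y + c X Y))"

definition dform :: "(real^'n \<Rightarrow> real^'n \<Rightarrow> real^'n) \<Rightarrow> 'n form1 \<Rightarrow> 'n form2" where
  "dform br \<alpha> = (\<lambda>X Y. - \<alpha> (br X Y))"

definition dbar10 :: "(real^'n \<Rightarrow> real^'n \<Rightarrow> real^'n) \<Rightarrow> real^'n^'n \<Rightarrow> 'n form1 \<Rightarrow> 'n form2" where
  "dbar10 br J \<omega> = comp11 J (dform br \<omega>)"

definition dbar01 :: "(real^'n \<Rightarrow> real^'n \<Rightarrow> real^'n) \<Rightarrow> real^'n^'n \<Rightarrow> 'n form1 \<Rightarrow> 'n form2" where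
  "dbar01 br J \<beta> = comp02 J (dform br \<beta>)"

definition is_hom :: "real^'n^'n \<Rightarrow> ('n form1 \<Rightarrow> 'n form1) \<Rightarrow> bool" where
  "is_hom J \<theta> \<longleftrightarrow>
     (\<forall>\<omega>\<in>L10 J. \<theta> \<omega> \<in> L01 J) \<and>
     (\<forall>\<omega>\<in>L10 J. \<forall>\<omega>'\<in>L10 J. \<theta> (\<lambda>x. \<omega> x + \<omega>' x) = (\<lambda>x. \<theta> \<omega> x + \<theta> \<omega>' x)) \<and>
     (\<forall>\<omega>\<in>L10 J. \<forall>c::complex. \<theta> (\<lambda>x. c * \<omega> x) = (\<lambda>x. c * \<theta> \<omega> x))"

definition theta11 :: "real^'n^'n \<Rightarrow> ('n form1 \<Rightarrow> 'n form1) \<Rightarrow> 'n form2 \<Rightarrow> 'n form2" where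
  "theta11 J \<theta> \<gamma> = (THE \<delta>. \<exists>m \<alpha> \<beta>. (\<forall>k<m. \<alpha> k \<in> L10 J \<and> \<beta> k \<in> L01 J) \<and>
                        \<gamma> = sum_wedges m \<alpha> \<beta> \<and> \<delta> = sum_wedges m (\<lambda>k. \<theta> (\<alpha> k)) \<beta>)"

definition dbar_hom :: "(real^'n \<Rightarrow> real^'n \<Rightarrow> real^'n) \<Rightarrow> real^'n^'n \<Rightarrow>
                        ('n form1 \<Rightarrow> 'n form1) \<Rightarrow> 'n form1 \<Rightarrow> 'n form2" where
  "dbar_hom br J \<theta> \<omega> = (\<lambda>X Y. dbar01 br J (\<theta> \<omega>) X Y - theta11 J \<theta> (dbar10 br J \<omega>) X Y)"

definition Kspace :: "(real^'n \<Rightarrow> real^'n \<Rightarrow> real^'n) \<Rightarrow> real^'n^'n \<Rightarrow> ('n form1 \<Rightarrow> 'n form1) set" where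
  "Kspace br J = {\<theta>. is_hom J \<theta> \<and> (\<forall>\<omega>\<in>L10 J. dbar_hom br J \<theta> \<omega> = (\<lambda>X Y. 0))}"

text \<open>Tangent vectors to C(g) at J, identified with elements of Hom(L10,L01) as in the paper:
  a path J_t in C(g) through J gives L10(J_t) = span of \<omega> + \<beta>_\<omega>(t), \<beta>_\<omega>(t) \<in> L01(J),
  \<beta>_\<omega>(0) = 0, and the tangent vector is \<theta> : \<omega> \<mapsto> \<beta>_\<omega>'(0).\<close>

definition tangent_space :: "(real^'n \<Rightarrow> real^'n \<Rightarrow> real^'n) \<Rightarrow> real^'n^'n \<Rightarrow> ('n form1 \<Rightarrow> 'n form1) set" where
  "tangent_space br J = {\<theta>. \<exists>Jt :: real \<Rightarrow> real^'n^'n.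
      Jt 0 = J \<and> (\<forall>t. Jt t \<in> Cg br) \<and>
      (\<forall>\<omega>\<in>L10 J. \<exists>\<beta> :: real \<Rightarrow> 'n form1.
          (\<forall>\<^sub>F t in nhds 0. \<beta> t \<in> L01 J \<and> (\<lambda>x. \<omega> x + \<beta> t x) \<in> L10 (Jt t)) \<and>
          \<beta> 0 = (\<lambda>x. 0) \<and>
          (\<forall>x. ((\<lambda>t. \<beta> t x) has_vector_derivative \<theta> \<omega> x) (at 0)))}"

fun Ck_on :: "nat \<Rightarrow> ('a::euclidean_space \<Rightarrow> 'b::euclidean_space) \<Rightarrow> 'a set \<Rightarrow> bool" where
  "Ck_on 0 f U = continuous_on U f"
| "Ck_on (Suc k) f U = (f differentiable_on U \<and>
      (\<forall>v. Ck_on k (\<lambda>x. frechet_derivative f (at x) v) U))"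

definition smooth_on :: "('a::euclidean_space \<Rightarrow> 'b::euclidean_space) \<Rightarrow> 'a set \<Rightarrow> bool" where
  "smooth_on f U \<longleftrightarrow> (\<forall>k. Ck_on k f U)"

text \<open>p is a smooth point of S: near p, S is an embedded smooth submanifold, i.e. locally the
  image of a smooth immersion (from an open piece of a linear subspace E) which is a
  homeomorphism onto its image.\<close>

definition smooth_point :: "'v::euclidean_space set \<Rightarrow> 'v \<Rightarrow> bool" where
  "smooth_point S p \<longleftrightarrow> p \<in> S \<and>
     (\<exists>U W E (\<phi> :: 'v \<Rightarrow> 'v). open U \<and> p \<in> U \<and> open W \<and> subspace E \<and> smooth_on \<phi> W \<and>
        \<phi> ` (E \<inter> W) = S \<inter> U \<and> inj_on \<phi> (E \<inter> W) \<and>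
        continuous_on (S \<inter> U) (inv_into (E \<inter> W) \<phi>) \<and>
        (\<forall>x\<in>E \<inter> W. inj_on (frechet_derivative \<phi> (at x)) E))"

end

theory Submission
  imports Defs
begin


lemma Jsq: "J \<in> acs \<Longrightarrow> J *v (J *v x) = - x"
proof -
  assume "J \<in> acs"
  then have "J *v (J *v x) = (0 - mat 1) *v x" by (simp add: acs_def matrix_vector_mul_assoc)
  also have "\<dots> = - x" by (simp only: matrix_vector_mult_diff_rdistrib) simp
  finally show ?thesis .
qed  

lemma linear_expand:
  fixes f :: "real^'n \<Rightarrow> 'b::real_vector"
  assumes "linear f"
  shows "f v = (\<Sum>i\<in>UNIV. v$i *\<^sub>R f (axis i 1))"
proof -
  have "f v = f (\<Sum>i\<in>UNIV. v$i *\<^sub>R axis i 1)"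
    using basis_expansion[of v] by (simp add: scalar_mult_eq_scaleR)
  also have "\<dots> = (\<Sum>i\<in>UNIV. v$i *\<^sub>R f (axis i 1))"
    by (simp add: linear_sum[OF assms] linear_scale[OF assms])
  finally show ?thesis .
qed

lemma L10_lin: "\<omega> \<in> L10 J \<Longrightarrow> linear \<omega>" by (simp add: L10_def)
lemma L01_lin: "\<omega> \<in> L01 J \<Longrightarrow> linear \<omega>" by (simp add: L01_def)
lemma L10_J: "\<omega> \<in> L10 J \<Longrightarrow> \<omega> (J *v x) = \<i> * \<omega> x" by (simp add: L10_def)
lemma L01_J: "\<omega> \<in> L01 J \<Longrightarrow> \<omega> (J *v x) = - \<i> * \<omega> x" by (simp add: L01_def)

lemma linear_cmul_c: "linear (f::real^'n \<Rightarrow> complex) \<Longrightarrow> linear (\<lambda>x. c * f x)"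
  unfolding linear_iff by (simp add: algebra_simps scaleR_conv_of_real)

lemma L10_add: "\<alpha> \<in> L10 J \<Longrightarrow> \<beta> \<in> L10 J \<Longrightarrow> (\<lambda>x. \<alpha> x + \<beta> x) \<in> L10 J"
  by (auto simp: L10_def linear_add algebra_simps intro: linear_compose_add)
lemma L01_add: "\<alpha> \<in> L01 J \<Longrightarrow> \<beta> \<in> L01 J \<Longrightarrow> (\<lambda>x. \<alpha> x + \<beta> x) \<in> L01 J"
  by (auto simp: L01_def linear_add algebra_simps intro: linear_compose_add)
lemma L10_cmul: "\<alpha> \<in> L10 J \<Longrightarrow> (\<lambda>x. c * \<alpha> x) \<in> L10 J"
  by (auto simp: L10_def linear_cmul_c)
lemma L01_cmul: "\<alpha> \<in> L01 J \<Longrightarrow> (\<lambda>x. c * \<alpha> x) \<in> L01 J"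
  by (auto simp: L01_def linear_cmul_c)
lemma L10_zero: "(\<lambda>x. 0) \<in> L10 J" by (simp add: L10_def linear_zero)
lemma L01_zero: "(\<lambda>x. 0) \<in> L01 J" by (simp add: L01_def linear_zero)
lemma L10_diff: "\<alpha> \<in> L10 J \<Longrightarrow> \<beta> \<in> L10 J \<Longrightarrow> (\<lambda>x. \<alpha> x - \<beta> x) \<in> L10 J"
  using L10_add[of \<alpha> J "\<lambda>x. (-1) * \<beta> x"] L10_cmul[of \<beta> J "-1"] by simp
lemma L01_diff: "\<alpha> \<in> L01 J \<Longrightarrow> \<beta> \<in> L01 J \<Longrightarrow> (\<lambda>x. \<alpha> x - \<beta> x) \<in> L01 J"
  using L01_add[of \<alpha> J "\<lambda>x. (-1) * \<beta> x"] L01_cmul[of \<beta> J "-1"] by simp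

lemma L10_sum: "(\<And>k. k \<in> S \<Longrightarrow> \<alpha> k \<in> L10 J) \<Longrightarrow> (\<lambda>x. \<Sum>k\<in>S. \<alpha> k x) \<in> L10 J"
proof (induction S rule: infinite_finite_induct)
  case (infinite A) then show ?case by (simp add: L10_zero)
next
  case empty then show ?case by (simp add: L10_zero)
next
  case (insert x F) then show ?case by (simp add: L10_add)
qed



definition SWs :: "'n form1 set \<Rightarrow> 'n form1 set \<Rightarrow> 'n form2 set" where
  "SWs A B = {sum_wedges m \<alpha> \<beta> | m \<alpha> \<beta>. \<forall>k<m. \<alpha> k \<in> A \<and> \<beta> k \<in> B}"

lemma L20_SWs: "L20 J = SWs (L10 J) (L10 J)" by (simp add: L20_def SWs_def)
lemma L11_SWs: "L11 J = SWs (L10 J) (L01 J)" by (simp add: L11_def SWs_def)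
lemma L02_SWs: "L02 J = SWs (L01 J) (L01 J)" by (simp add: L02_def SWs_def)

lemma SWs_zero: "(\<lambda>X Y. 0) \<in> SWs A B"
  unfolding SWs_def by (rule CollectI, rule exI[of _ 0]) (auto simp: sum_wedges_def)

lemma SWs_add_wedge:
  assumes "a \<in> SWs A B" "\<alpha>0 \<in> A" "\<beta>0 \<in> B"
  shows "(\<lambda>X Y. a X Y + wedge \<alpha>0 \<beta>0 X Y) \<in> SWs A B"
proof -
  obtain m \<alpha> \<beta> where a: "a = sum_wedges m \<alpha> \<beta>" "\<forall>k<m. \<alpha> k \<in> A \<and> \<beta> k \<in> B"
    using assms(1) by (auto simp: SWs_def)
  have "(\<lambda>X Y. a X Y + wedge \<alpha>0 \<beta>0 X Y) = sum_wedges (Suc m) (\<alpha>(m:=\<alpha>0)) (\<beta>(m:=\<beta>0))"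
    unfolding a sum_wedges_def by (auto simp: fun_eq_iff intro!: sum.cong)
  moreover have "\<forall>k<Suc m. (\<alpha>(m:=\<alpha>0)) k \<in> A \<and> (\<beta>(m:=\<beta>0)) k \<in> B"
    using a assms by (auto simp: less_Suc_eq)
  ultimately show ?thesis unfolding SWs_def by blast
qed

lemma SWs_add:
  assumes "a \<in> SWs A B" "b \<in> SWs A B"
  shows "(\<lambda>X Y. a X Y + b X Y) \<in> SWs A B"
proof -
  obtain m \<alpha> \<beta> where b: "b = sum_wedges m \<alpha> \<beta>" "\<forall>k<m. \<alpha> k \<in> A \<and> \<beta> k \<in> B"
    using assms(2) by (auto simp: SWs_def)
  have "\<forall>k<m. \<alpha> k \<in> A \<and> \<beta> k \<in> B \<Longrightarrow> (\<lambda>X Y. a X Y + sum_wedges m \<alpha> \<beta> X Y) \<in> SWs A B"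
  proof (induction m)
    case 0 then show ?case using assms(1) by (simp add: sum_wedges_def)
  next
    case (Suc m)
    then have "(\<lambda>X Y. a X Y + sum_wedges m \<alpha> \<beta> X Y) \<in> SWs A B" by auto
    from SWs_add_wedge[OF this, of "\<alpha> m" "\<beta> m"] Suc.prems show ?case
      by (simp add: sum_wedges_def add.assoc)
  qed
  with b show ?thesis by simp
qed

lemma SWs_wedge: "\<alpha> \<in> A \<Longrightarrow> \<beta> \<in> B \<Longrightarrow> wedge \<alpha> \<beta> \<in> SWs A B"
  using SWs_add_wedge[OF SWs_zero, of \<alpha> A \<beta> B] by simp

lemma SWs_sum:
  assumes "finite S" "\<And>k. k \<in> S \<Longrightarrow> w k \<in> SWs A B"
  shows "(\<lambda>X Y. \<Sum>k\<in>S. w k X Y) \<in> SWs A B"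
  using assms
proof (induction S rule: finite_induct)
  case empty then show ?case by (simp add: SWs_zero)
next
  case (insert x F)
  then show ?case using SWs_add[of "w x" A B "\<lambda>X Y. \<Sum>k\<in>F. w k X Y"] by simp
qed

lemma SWs_prop2:
  assumes "\<gamma> \<in> SWs A B"
    and "\<And>\<alpha> \<beta>. \<alpha> \<in> A \<Longrightarrow> \<beta> \<in> B \<Longrightarrow> wedge \<alpha> \<beta> (f X) (g Y) = c * wedge \<alpha> \<beta> (f' X) (g' Y)"
  shows "\<gamma> (f X) (g Y) = c * \<gamma> (f' X) (g' Y)"
proof -
  obtain m \<alpha> \<beta> where a: "\<gamma> = sum_wedges m \<alpha> \<beta>" "\<forall>k<m. \<alpha> k \<in> A \<and> \<beta> k \<in> B"
    using assms(1) by (auto simp: SWs_def)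
  show ?thesis unfolding a sum_wedges_def using a(2) assms(2)
    by (simp add: sum_distrib_left)
qed

lemma SWs_prop:
  assumes "\<gamma> \<in> SWs A B"
    and "\<And>\<alpha> \<beta>. \<alpha> \<in> A \<Longrightarrow> \<beta> \<in> B \<Longrightarrow> wedge \<alpha> \<beta> (f X) (g Y) = c * wedge \<alpha> \<beta> X Y"
  shows "\<gamma> (f X) (g Y) = c * \<gamma> X Y"
  using SWs_prop2[of \<gamma> A B f X g Y c id id] assms by simp

lemma ii: "\<i> * (\<i> * z) = - z" by (simp add: mult.assoc[symmetric])

lemma L20_J1: "J \<in> acs \<Longrightarrow> a \<in> L20 J \<Longrightarrow> a (J *v X) Y = \<i> * a X Y"
  using SWs_prop[of a "L10 J" "L10 J" "(*v) J" X id Y "\<i>"]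
  by (simp add: L20_SWs wedge_def L10_J algebra_simps)
lemma L20_J2: "J \<in> acs \<Longrightarrow> a \<in> L20 J \<Longrightarrow> a X (J *v Y) = \<i> * a X Y"
  using SWs_prop[of a "L10 J" "L10 J" id X "(*v) J" Y "\<i>"]
  by (simp add: L20_SWs wedge_def L10_J algebra_simps)
lemma L02_J1: "J \<in> acs \<Longrightarrow> a \<in> L02 J \<Longrightarrow> a (J *v X) Y = - \<i> * a X Y"
  using SWs_prop[of a "L01 J" "L01 J" "(*v) J" X id Y "- \<i>"]
  by (simp add: L02_SWs wedge_def L01_J algebra_simps)
lemma L02_J2: "J \<in> acs \<Longrightarrow> a \<in> L02 J \<Longrightarrow> a X (J *v Y) = - \<i> * a X Y"
  using SWs_prop[of a "L01 J" "L01 J" id X "(*v) J" Y "- \<i>"]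
  by (simp add: L02_SWs wedge_def L01_J algebra_simps)
lemma L11_JJ: "J \<in> acs \<Longrightarrow> a \<in> L11 J \<Longrightarrow> a (J *v X) (J *v Y) = a X Y"
  using SWs_prop[of a "L10 J" "L01 J" "(*v) J" X "(*v) J" Y 1]
  by (simp add: L11_SWs wedge_def L01_J L10_J algebra_simps ii)
lemma L11_J1: "J \<in> acs \<Longrightarrow> a \<in> L11 J \<Longrightarrow> a (J *v X) Y = - a X (J *v Y)"
  using SWs_prop2[of a "L10 J" "L01 J" "(*v) J" X id Y "-1" id "(*v) J"]
  by (simp add: L11_SWs wedge_def L01_J L10_J algebra_simps ii)

lemma L11_JJ2: "J \<in> acs \<Longrightarrow> a \<in> L11 J \<Longrightarrow> a X (J *v (J *v Y)) = - a X Y"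
  using SWs_prop[of a "L10 J" "L01 J" id X "\<lambda>Y. J *v (J *v Y)" Y "-1"]
  by (simp add: L11_SWs wedge_def L01_J L10_J algebra_simps ii)



definition bil :: "('n::finite) form2 \<Rightarrow> bool" where
  "bil \<gamma> \<longleftrightarrow> (\<forall>X. linear (\<gamma> X)) \<and> (\<forall>Y. linear (\<lambda>X. \<gamma> X Y))"

lemma bil_expand:
  assumes "bil \<gamma>"
  shows "\<gamma> X Y = (\<Sum>i\<in>UNIV. \<Sum>j\<in>UNIV. (X$i * Y$j) *\<^sub>R \<gamma> (axis i 1) (axis j 1))"
proof -
  have "\<gamma> X Y = (\<Sum>i\<in>UNIV. X$i *\<^sub>R \<gamma> (axis i 1) Y)"
    using linear_expand[of "\<lambda>X. \<gamma> X Y" X] assms by (simp add: bil_def)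
  also have "\<dots> = (\<Sum>i\<in>UNIV. X$i *\<^sub>R (\<Sum>j\<in>UNIV. Y$j *\<^sub>R \<gamma> (axis i 1) (axis j 1)))"
    using linear_expand[of "\<gamma> (axis _ 1)" Y] assms by (simp add: bil_def)
  also have "\<dots> = (\<Sum>i\<in>UNIV. \<Sum>j\<in>UNIV. (X$i * Y$j) *\<^sub>R \<gamma> (axis i 1) (axis j 1))"
    by (simp add: scaleR_sum_right)
  finally show ?thesis .
qed

definition pf :: "real^'n^'n \<Rightarrow> 'n \<Rightarrow> ('n::finite) form1" where
  "pf J i = (\<lambda>V. (complex_of_real (V$i) - \<i> * complex_of_real ((J *v V)$i)) / 2)"
definition qf :: "real^'n^'n \<Rightarrow> 'n \<Rightarrow> ('n::finite) form1" where
  "qf J i = (\<lambda>V. (complex_of_real (V$i) + \<i> * complex_of_real ((J *v V)$i)) / 2)"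

lemma Jv_add: "A *v (x + y) = A *v x + A *v y" for A :: "real^'n^'m"
  by (rule linear_add[OF matrix_vector_mul_linear])
lemma Jv_scale: "A *v (r *\<^sub>R x) = r *\<^sub>R (A *v x)" for A :: "real^'n^'m"
  by (rule linear_scale[OF matrix_vector_mul_linear])
lemma Jv_minus: "A *v (- x) = - (A *v x)" for A :: "real^'n^'m"
  by (rule linear_neg[OF matrix_vector_mul_linear])
lemma Jv_diff: "A *v (x - y) = A *v x - A *v y" for A :: "real^'n^'m"
  by (rule linear_diff[OF matrix_vector_mul_linear])

lemma scaleR_c: "r *\<^sub>R (z::complex) = complex_of_real r * z"
  by (simp add: scaleR_conv_of_real)

lemma linear_pq: "linear (\<lambda>V. (complex_of_real (V$i) + c * complex_of_real ((J *v V)$i)) / 2)"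
  for J :: "real^'n^'n"
  unfolding linear_iff by (simp add: Jv_add Jv_scale scaleR_c algebra_simps add_divide_distrib)

lemma pf_L10: "J \<in> acs \<Longrightarrow> pf J i \<in> L10 J"
  using linear_pq[of i "-\<i>" J]
  by (simp add: L10_def pf_def Jsq field_simps ii)

lemma qf_L01: "J \<in> acs \<Longrightarrow> qf J i \<in> L01 J"
  using linear_pq[of i "\<i>" J]
  by (simp add: L01_def qf_def Jsq field_simps ii)

lemma pq_sum: "pf J i V + qf J i V = complex_of_real (V$i)"
  by (simp add: pf_def qf_def add_divide_distrib[symmetric])

lemma wedge_split:
  assumes "\<And>V. q1 V = x1 V - p1 V" "\<And>V. q2 V = x2 V - p2 V"
  shows "wedge (\<lambda>V. g * p1 V) p2 X Y + (wedge (\<lambda>V. g * p1 V) q2 X Y + wedge (\<lambda>V. - g * p2 V) q1 X Y)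
     + wedge (\<lambda>V. g * q1 V) q2 X Y = g * (x1 X * x2 Y - x1 Y * x2 X)"
  unfolding wedge_def assms by (simp add: algebra_simps)

lemma decomp_exists:
  assumes J: "J \<in> acs" and bg: "bil \<gamma>" and alt: "\<And>X Y. \<gamma> X Y = - \<gamma> Y X"
  shows "\<exists>a b c. a \<in> L20 J \<and> b \<in> L11 J \<and> c \<in> L02 J \<and> \<gamma> = (\<lambda>X Y. a X Y + b X Y + c X Y)"
proof -
  define g where "g i j = \<gamma> (axis i 1) (axis j 1)" for i j
  define a where "a = (\<lambda>X Y. \<Sum>i\<in>UNIV. \<Sum>j\<in>UNIV. wedge (\<lambda>V. g i j / 2 * pf J i V) (pf J j) X Y)"
  define b1 where "b1 = (\<lambda>X Y. \<Sum>i\<in>UNIV. \<Sum>j\<in>UNIV. wedge (\<lambda>V. g i j / 2 * pf J i V) (qf J j) X Y)"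
  define b2 where "b2 = (\<lambda>X Y. \<Sum>i\<in>UNIV. \<Sum>j\<in>UNIV. wedge (\<lambda>V. - (g i j / 2) * pf J j V) (qf J i) X Y)"
  define c where "c = (\<lambda>X Y. \<Sum>i\<in>UNIV. \<Sum>j\<in>UNIV. wedge (\<lambda>V. g i j / 2 * qf J i V) (qf J j) X Y)"
  have a: "a \<in> L20 J" unfolding a_def L20_SWs
    by (intro SWs_sum SWs_wedge L10_cmul pf_L10 J) simp_all
  have b1: "b1 \<in> L11 J" unfolding b1_def L11_SWs
    by (intro SWs_sum SWs_wedge L10_cmul pf_L10 qf_L01 J) simp_all
  have b2: "b2 \<in> L11 J" unfolding b2_def L11_SWs
    by (intro SWs_sum SWs_wedge L10_cmul pf_L10 qf_L01 J) simp_all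
  have c: "c \<in> L02 J" unfolding c_def L02_SWs
    by (intro SWs_sum SWs_wedge L01_cmul qf_L01 J) simp_all
  have b: "(\<lambda>X Y. b1 X Y + b2 X Y) \<in> L11 J"
    using SWs_add b1 b2 by (simp add: L11_SWs)
  have q: "qf J i V = complex_of_real (V$i) - pf J i V" for i V
    using pq_sum[of J i V] by (simp add: algebra_simps)
  have gs: "g j i = - g i j" for i j unfolding g_def by (rule alt)
  have eq: "\<gamma> X Y = a X Y + (b1 X Y + b2 X Y) + c X Y" for X Y
  proof -
    have "a X Y + (b1 X Y + b2 X Y) + c X Y = (\<Sum>i\<in>UNIV. \<Sum>j\<in>UNIV.
         g i j / 2 * (complex_of_real (X$i) * complex_of_real (Y$j) - complex_of_real (Y$i) * complex_of_real (X$j)))"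
      unfolding a_def b1_def b2_def c_def
      apply (simp only: sum.distrib[symmetric])
      apply (intro sum.cong refl)
      apply (rule wedge_split[OF q q])
      done
    also have "\<dots> = (\<Sum>i\<in>UNIV. \<Sum>j\<in>UNIV. g i j / 2 * (complex_of_real (X$i) * complex_of_real (Y$j)))
        - (\<Sum>i\<in>UNIV. \<Sum>j\<in>UNIV. g i j / 2 * (complex_of_real (Y$i) * complex_of_real (X$j)))"
      by (simp add: right_diff_distrib sum_subtractf)
    also have "(\<Sum>i\<in>UNIV. \<Sum>j\<in>UNIV. g i j / 2 * (complex_of_real (Y$i) * complex_of_real (X$j)))
        = (\<Sum>i\<in>UNIV. \<Sum>j\<in>UNIV. g j i / 2 * (complex_of_real (Y$j) * complex_of_real (X$i)))"
      by (rule sum.swap)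
    also have "\<dots> = - (\<Sum>i\<in>UNIV. \<Sum>j\<in>UNIV. g i j / 2 * (complex_of_real (X$i) * complex_of_real (Y$j)))"
      unfolding sum_negf[symmetric]
      apply (intro sum.cong refl)
      subgoal for i j using gs[of i j] by (simp add: algebra_simps)
      done
    also have "(\<Sum>i\<in>UNIV. \<Sum>j\<in>UNIV. g i j / 2 * (complex_of_real (X$i) * complex_of_real (Y$j)))
        - - (\<Sum>i\<in>UNIV. \<Sum>j\<in>UNIV. g i j / 2 * (complex_of_real (X$i) * complex_of_real (Y$j)))
        = (\<Sum>i\<in>UNIV. \<Sum>j\<in>UNIV. (X$i * Y$j) *\<^sub>R g i j)"
      by (simp add: sum.distrib[symmetric] scaleR_c algebra_simps)
    also have "\<dots> = \<gamma> X Y" using bil_expand[OF bg, of X Y] by (simp add: g_def)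
    finally show ?thesis by simp
  qed
  show ?thesis
    by (rule exI[of _ a], rule exI[of _ "\<lambda>X Y. b1 X Y + b2 X Y"], rule exI[of _ c])
      (use a b c eq in auto)
qed


definition F02 :: "real^'n^'n \<Rightarrow> ('n::finite) form2 \<Rightarrow> 'n form2" where
  "F02 J \<gamma> = (\<lambda>X Y. (\<gamma> X Y + \<i> * \<gamma> (J *v X) Y + \<i> * \<gamma> X (J *v Y) - \<gamma> (J *v X) (J *v Y)) / 4)"
definition F11 :: "real^'n^'n \<Rightarrow> ('n::finite) form2 \<Rightarrow> 'n form2" where
  "F11 J \<gamma> = (\<lambda>X Y. (\<gamma> X Y + \<gamma> (J *v X) (J *v Y)) / 2)"

lemma F_decomp:
  assumes J: "J \<in> acs" and a: "a \<in> L20 J" and b: "b \<in> L11 J" and c: "c \<in> L02 J"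
  shows "F02 J (\<lambda>X Y. a X Y + b X Y + c X Y) = c" "F11 J (\<lambda>X Y. a X Y + b X Y + c X Y) = b"
  using L20_J1[OF J a] L20_J2[OF J a] L02_J1[OF J c] L02_J2[OF J c] L11_JJ[OF J b] L11_J1[OF J b] L11_JJ2[OF J b]
  by (auto simp: F02_def F11_def fun_eq_iff field_simps ii)

lemma comp02_eq:
  assumes J: "J \<in> acs" and bg: "bil \<gamma>" and alt: "\<And>X Y. \<gamma> X Y = - \<gamma> Y X"
  shows "comp02 J \<gamma> = F02 J \<gamma>"
proof -
  obtain a b c where abc: "a \<in> L20 J" "b \<in> L11 J" "c \<in> L02 J" "\<gamma> = (\<lambda>X Y. a X Y + b X Y + c X Y)"
    using decomp_exists[OF J bg alt] by blast
  show ?thesis unfolding comp02_def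
  proof (rule the_equality)
    show "\<exists>a b. a \<in> L20 J \<and> b \<in> L11 J \<and> F02 J \<gamma> \<in> L02 J \<and> \<gamma> = (\<lambda>X Y. a X Y + b X Y + F02 J \<gamma> X Y)"
      using abc F_decomp[OF J abc(1-3)] by auto
    fix c' assume "\<exists>a b. a \<in> L20 J \<and> b \<in> L11 J \<and> c' \<in> L02 J \<and> \<gamma> = (\<lambda>X Y. a X Y + b X Y + c' X Y)"
    then show "c' = F02 J \<gamma>" using F_decomp[OF J] by auto
  qed
qed

lemma comp11_eq:
  assumes J: "J \<in> acs" and bg: "bil \<gamma>" and alt: "\<And>X Y. \<gamma> X Y = - \<gamma> Y X"
  shows "comp11 J \<gamma> = F11 J \<gamma>" "F11 J \<gamma> \<in> L11 J"
proof -
  obtain a b c where abc: "a \<in> L20 J" "b \<in> L11 J" "c \<in> L02 J" "\<gamma> = (\<lambda>X Y. a X Y + b X Y + c X Y)"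
    using decomp_exists[OF J bg alt] by blast
  show "F11 J \<gamma> \<in> L11 J" using abc F_decomp[OF J abc(1-3)] by auto
  show "comp11 J \<gamma> = F11 J \<gamma>" unfolding comp11_def
  proof (rule the_equality)
    show "\<exists>a c. a \<in> L20 J \<and> F11 J \<gamma> \<in> L11 J \<and> c \<in> L02 J \<and> \<gamma> = (\<lambda>X Y. a X Y + F11 J \<gamma> X Y + c X Y)"
      using abc F_decomp[OF J abc(1-3)] by auto
    fix b' assume "\<exists>a c. a \<in> L20 J \<and> b' \<in> L11 J \<and> c \<in> L02 J \<and> \<gamma> = (\<lambda>X Y. a X Y + b' X Y + c X Y)"
    then show "b' = F11 J \<gamma>" using F_decomp[OF J] by auto
  qed
qed



definition Tf :: "real^'n^'n \<Rightarrow> ('n::finite) form2 \<Rightarrow> 'n form2" where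
  "Tf J \<gamma> = (\<lambda>Z W. (\<gamma> Z W + \<i> * \<gamma> Z (J *v W) - \<i> * \<gamma> (J *v Z) W + \<gamma> (J *v Z) (J *v W)) / 4)"
definition Th :: "real^'n^'n \<Rightarrow> (('n::finite) form1 \<Rightarrow> 'n form1) \<Rightarrow> 'n form2 \<Rightarrow> 'n form2" where
  "Th J \<theta> \<gamma> = (\<lambda>X Y. \<theta> (\<lambda>Z. Tf J \<gamma> Z Y) X - \<theta> (\<lambda>Z. Tf J \<gamma> Z X) Y)"

definition clin :: "real^'n^'n \<Rightarrow> (('n::finite) form1 \<Rightarrow> 'n form1) \<Rightarrow> bool" where
  "clin J \<theta> \<longleftrightarrow> (\<forall>\<omega>\<in>L10 J. \<forall>\<omega>'\<in>L10 J. \<theta> (\<lambda>x. \<omega> x + \<omega>' x) = (\<lambda>x. \<theta> \<omega> x + \<theta> \<omega>' x)) \<and>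
     (\<forall>\<omega>\<in>L10 J. \<forall>c::complex. \<theta> (\<lambda>x. c * \<omega> x) = (\<lambda>x. c * \<theta> \<omega> x))"

lemma clin_add: "clin J \<theta> \<Longrightarrow> \<omega> \<in> L10 J \<Longrightarrow> \<omega>' \<in> L10 J \<Longrightarrow>
   \<theta> (\<lambda>x. \<omega> x + \<omega>' x) = (\<lambda>x. \<theta> \<omega> x + \<theta> \<omega>' x)"
  by (simp add: clin_def)
lemma clin_scale: "clin J \<theta> \<Longrightarrow> \<omega> \<in> L10 J \<Longrightarrow>
   \<theta> (\<lambda>x. c * \<omega> x) = (\<lambda>x. c * \<theta> \<omega> x)"
  by (simp add: clin_def)

lemma theta_sum:
  fixes m :: nat and \<alpha> :: "nat \<Rightarrow> ('n::finite) form1"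
  assumes cl: "clin J \<theta>" and \<alpha>: "\<forall>k<m. \<alpha> k \<in> L10 J"
  shows "\<theta> (\<lambda>Z. \<Sum>k<m. c k * \<alpha> k Z) = (\<lambda>X. \<Sum>k<m. c k * \<theta> (\<alpha> k) X)"
  using \<alpha>
proof (induction m)
  case 0
  from cl have "\<forall>\<omega>\<in>L10 J. \<forall>c. \<theta> (\<lambda>x. c * \<omega> x) = (\<lambda>x. c * \<theta> \<omega> x)" by (simp add: clin_def)
  from spec[OF bspec[OF this L10_zero], of 0] show ?case by simp
next
  case (Suc m)
  have S: "(\<lambda>Z. \<Sum>k<m. c k * \<alpha> k Z) \<in> L10 J"
    using Suc.prems by (intro L10_sum L10_cmul) auto
  have A: "\<alpha> m \<in> L10 J" using Suc.prems by auto
  have "\<theta> (\<lambda>Z. \<Sum>k<Suc m. c k * \<alpha> k Z) = \<theta> (\<lambda>Z. (\<Sum>k<m. c k * \<alpha> k Z) + c m * \<alpha> m Z)"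
    by simp
  also have "\<dots> = (\<lambda>X. \<theta> (\<lambda>Z. \<Sum>k<m. c k * \<alpha> k Z) X + \<theta> (\<lambda>Z. c m * \<alpha> m Z) X)"
    using clin_add[OF cl S L10_cmul[OF A]] by simp
  also have "\<dots> = (\<lambda>X. (\<Sum>k<m. c k * \<theta> (\<alpha> k) X) + c m * \<theta> (\<alpha> m) X)"
    using Suc clin_scale[OF cl A] by auto
  finally show ?case by simp
qed

lemma Tf_sw:
  assumes J: "J \<in> acs" and ab: "\<forall>k<m. \<alpha> k \<in> L10 J \<and> \<beta> k \<in> L01 J"
  shows "Tf J (sum_wedges m \<alpha> \<beta>) Z W = (\<Sum>k<m. \<beta> k W * \<alpha> k Z)"
proof -
  have "Tf J (sum_wedges m \<alpha> \<beta>) Z W = (\<Sum>k<m. (wedge (\<alpha> k) (\<beta> k) Z W + \<i> * wedge (\<alpha> k) (\<beta> k) Z (J *v W)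
     - \<i> * wedge (\<alpha> k) (\<beta> k) (J *v Z) W + wedge (\<alpha> k) (\<beta> k) (J *v Z) (J *v W)) / 4)"
    unfolding Tf_def sum_wedges_def
    by (simp only: sum_divide_distrib[symmetric] sum.distrib sum_subtractf sum_distrib_left[symmetric])
  also have "\<dots> = (\<Sum>k<m. \<beta> k W * \<alpha> k Z)"
    using ab by (intro sum.cong refl) (simp add: wedge_def L10_J L01_J field_simps ii)
  finally show ?thesis .
qed

lemma Th_sw:
  assumes J: "J \<in> acs" and cl: "clin J \<theta>" and ab: "\<forall>k<m. \<alpha> k \<in> L10 J \<and> \<beta> k \<in> L01 J"
  shows "Th J \<theta> (sum_wedges m \<alpha> \<beta>) = sum_wedges m (\<lambda>k. \<theta> (\<alpha> k)) \<beta>"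
proof -
  have "\<theta> (\<lambda>Z. Tf J (sum_wedges m \<alpha> \<beta>) Z W) = (\<lambda>X. \<Sum>k<m. \<beta> k W * \<theta> (\<alpha> k) X)" for W
    using theta_sum[OF cl, of m \<alpha> "\<lambda>k. \<beta> k W"] ab by (simp add: Tf_sw[OF J ab])
  then show ?thesis
    by (simp add: Th_def sum_wedges_def wedge_def fun_eq_iff sum_subtractf algebra_simps)
qed

lemma theta11_eq:
  assumes J: "J \<in> acs" and cl: "clin J \<theta>" and b: "b \<in> L11 J"
  shows "theta11 J \<theta> b = Th J \<theta> b"
  unfolding theta11_def
proof (rule the_equality)
  obtain m \<alpha> \<beta> where r: "b = sum_wedges m \<alpha> \<beta>" "\<forall>k<m. \<alpha> k \<in> L10 J \<and> \<beta> k \<in> L01 J"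
    using b unfolding L11_def by blast
  show "\<exists>m \<alpha> \<beta>. (\<forall>k<m. \<alpha> k \<in> L10 J \<and> \<beta> k \<in> L01 J) \<and> b = sum_wedges m \<alpha> \<beta> \<and>
      Th J \<theta> b = sum_wedges m (\<lambda>k. \<theta> (\<alpha> k)) \<beta>"
    using r Th_sw[OF J cl r(2)] by blast
next
  fix \<delta> assume "\<exists>m \<alpha> \<beta>. (\<forall>k<m. \<alpha> k \<in> L10 J \<and> \<beta> k \<in> L01 J) \<and> b = sum_wedges m \<alpha> \<beta> \<and>
      \<delta> = sum_wedges m (\<lambda>k. \<theta> (\<alpha> k)) \<beta>"
  then show "\<delta> = Th J \<theta> b" using Th_sw[OF J cl] by auto
qed



lemma bilD1: "bil \<gamma> \<Longrightarrow> linear (\<gamma> X)" by (simp add: bil_def)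
lemma bilD2: "bil \<gamma> \<Longrightarrow> linear (\<lambda>X. \<gamma> X Y)" by (simp add: bil_def)

lemma bil_neg1: "bil \<gamma> \<Longrightarrow> \<gamma> (- X) Y = - \<gamma> X Y"
  using linear_neg[OF bilD2[of \<gamma> Y]] by simp
lemma bil_neg2: "bil \<gamma> \<Longrightarrow> \<gamma> X (- Y) = - \<gamma> X Y"
  using linear_neg[OF bilD1[of \<gamma> X]] by simp
lemma bil_add1: "bil \<gamma> \<Longrightarrow> \<gamma> (X + X') Y = \<gamma> X Y + \<gamma> X' Y"
  using linear_add[OF bilD2[of \<gamma> Y]] by simp
lemma bil_add2: "bil \<gamma> \<Longrightarrow> \<gamma> X (Y + Y') = \<gamma> X Y + \<gamma> X Y'"
  using linear_add[OF bilD1[of \<gamma> X]] by simp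

lemma M_alg:
  fixes a b c d :: complex
  assumes "(a + \<i> * c + \<i> * b - d) / 4 = 0"
  shows "\<i> * a - b = 2 * \<i> * ((((a + d) / 2) + \<i> * ((b - c) / 2) - \<i> * ((c - b) / 2) + ((d + a) / 2)) / 4)"
proof -
  have "d = a + \<i> * c + \<i> * b" using assms by simp
  then show ?thesis by (simp add: algebra_simps ii diff_divide_distrib add_divide_distrib)
qed

lemma M_id:
  assumes J: "J \<in> acs" and bg: "bil \<gamma>" and f: "F02 J \<gamma> U W = 0"
  shows "\<i> * \<gamma> U W - \<gamma> U (J *v W) = 2 * \<i> * Tf J (F11 J \<gamma>) U W"
proof -
  have v: "F11 J \<gamma> U W = (\<gamma> U W + \<gamma> (J *v U) (J *v W)) / 2"
    "F11 J \<gamma> U (J *v W) = (\<gamma> U (J *v W) - \<gamma> (J *v U) W) / 2"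
    "F11 J \<gamma> (J *v U) W = (\<gamma> (J *v U) W - \<gamma> U (J *v W)) / 2"
    "F11 J \<gamma> (J *v U) (J *v W) = (\<gamma> (J *v U) (J *v W) + \<gamma> U W) / 2"
    by (simp_all add: F11_def Jsq[OF J] bil_neg1[OF bg] bil_neg2[OF bg])
  show ?thesis unfolding Tf_def v
    by (rule M_alg) (use f in \<open>simp add: F02_def\<close>)
qed

lemma Tf_L10:
  assumes J: "J \<in> acs" and bg: "bil \<gamma>"
  shows "(\<lambda>Z. Tf J (F11 J \<gamma>) Z W) \<in> L10 J"
proof -
  have lin: "linear (\<lambda>Z. Tf J (F11 J \<gamma>) Z W)"
    unfolding Tf_def F11_def linear_iff
    by (simp add: Jv_add Jv_scale bil_add1[OF bg] linear_scale[OF bilD2[OF bg]] scaleR_c algebra_simps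
        add_divide_distrib diff_divide_distrib)
  have "Tf J (F11 J \<gamma>) (J *v Z) W = \<i> * Tf J (F11 J \<gamma>) Z W" for Z
  proof -
    have v: "F11 J \<gamma> (J *v Z) W = (\<gamma> (J *v Z) W - \<gamma> Z (J *v W)) / 2"
      "F11 J \<gamma> (J *v Z) (J *v W) = (\<gamma> (J *v Z) (J *v W) + \<gamma> Z W) / 2"
      "F11 J \<gamma> (J *v (J *v Z)) W = - (\<gamma> Z W + \<gamma> (J *v Z) (J *v W)) / 2"
      "F11 J \<gamma> (J *v (J *v Z)) (J *v W) = (\<gamma> (J *v Z) W - \<gamma> Z (J *v W)) / 2"
      "F11 J \<gamma> Z W = (\<gamma> Z W + \<gamma> (J *v Z) (J *v W)) / 2"
      "F11 J \<gamma> Z (J *v W) = (\<gamma> Z (J *v W) - \<gamma> (J *v Z) W) / 2"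
      by (simp_all add: F11_def Jsq[OF J] Jv_minus bil_neg1[OF bg] bil_neg2[OF bg])
    show ?thesis
      unfolding Tf_def v by (simp add: algebra_simps ii diff_divide_distrib add_divide_distrib)
  qed
  then show ?thesis unfolding L10_def using lin by simp
qed

lemma dform_bil:
  assumes lie: "lie_bracket br" and l: "linear \<phi>"
  shows "bil (dform br \<phi>)" "\<And>X Y. dform br \<phi> X Y = - dform br \<phi> Y X"
proof -
  have b1: "linear (br X)" for X using lie unfolding lie_bracket_def by blast
  have b2: "linear (\<lambda>X. br X Y)" for Y using lie unfolding lie_bracket_def by blast
  have anti: "br X Y = - br Y X" for X Y using lie unfolding lie_bracket_def by blast
  have "linear (\<lambda>Y. - \<phi> (br X Y))" for X
    using linear_compose_neg[OF linear_compose[OF b1 l]] unfolding o_def .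
  moreover have "linear (\<lambda>X. - \<phi> (br X Y))" for Y
    using linear_compose_neg[OF linear_compose[OF b2 l]] unfolding o_def .
  ultimately show "bil (dform br \<phi>)" by (simp add: bil_def dform_def)
  show "dform br \<phi> X Y = - dform br \<phi> Y X" for X Y
    by (simp add: dform_def anti[of X Y] linear_neg[OF l])
qed

lemma integ_eq:
  assumes "J' \<in> Cg br" "\<phi> \<in> L10 J'"
  shows "dform br \<phi> X Y + \<i> * dform br \<phi> (J' *v X) Y + \<i> * dform br \<phi> X (J' *v Y)
           - dform br \<phi> (J' *v X) (J' *v Y) = 0"
proof -
  have i: "br (J' *v X) (J' *v Y) = br X Y + J' *v br (J' *v X) Y + J' *v br X (J' *v Y)"
    using assms(1) by (simp add: Cg_def integrable_def)
  have l: "linear \<phi>" using assms(2) by (simp add: L10_def)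
  show ?thesis
    unfolding dform_def i linear_add[OF l] L10_J[OF assms(2)] by (simp add: algebra_simps)
qed

lemma F02_zero:
  assumes "J \<in> Cg br" "\<omega> \<in> L10 J"
  shows "F02 J (dform br \<omega>) X Y = 0"
  using integ_eq[OF assms, of X Y] by (simp add: F02_def)

lemma K1:
  assumes "\<psi> \<in> L10 J" "\<beta> \<in> L01 J" "(\<lambda>x. \<psi> x + \<beta> x) \<in> L10 J'"
  shows "\<psi> (J' *v X - J *v X) = 2 * \<i> * \<beta> X - \<beta> (J' *v X - J *v X)"
proof -
  have h1: "\<psi> (J' *v X) = \<i> * \<psi> X + \<i> * \<beta> X - \<beta> (J' *v X)"
    using L10_J[OF assms(3), of X] by (simp add: algebra_simps)
  have "\<psi> (J' *v X - J *v X) = \<psi> (J' *v X) - \<psi> (J *v X)"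
    by (rule linear_diff[OF L10_lin[OF assms(1)]])
  have "\<beta> (J' *v X - J *v X) = \<beta> (J' *v X) - \<beta> (J *v X)"
    by (rule linear_diff[OF L01_lin[OF assms(2)]])
  note * = this
  show ?thesis
    unfolding * \<open>\<psi> (J' *v X - J *v X) = \<psi> (J' *v X) - \<psi> (J *v X)\<close> h1 L10_J[OF assms(1)] L01_J[OF assms(2)]
    by (simp add: algebra_simps)
qed

lemma Uq:
  assumes "\<delta> \<in> L01 J" "\<delta> \<in> L10 J'"
  shows "\<delta> (J' *v X - J *v X) = 2 * \<i> * \<delta> X"
proof -
  have "\<delta> (J' *v X - J *v X) = \<delta> (J' *v X) - \<delta> (J *v X)"
    by (rule linear_diff[OF L01_lin[OF assms(1)]])
  then show ?thesis using L01_J[OF assms(1)] L10_J[OF assms(2)]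
    by (simp add: algebra_simps)
qed

lemma main_id:
  assumes J: "J \<in> acs" and bg: "bil \<gamma>" and alt: "\<And>X Y. \<gamma> X Y = - \<gamma> Y X"
    and f02: "\<And>X Y. F02 J \<gamma> X Y = 0"
    and eq: "(\<gamma> X Y + \<eta> X Y) + \<i> * (\<gamma> (J' *v X) Y + \<eta> (J' *v X) Y) + \<i> * (\<gamma> X (J' *v Y) + \<eta> X (J' *v Y))
       - (\<gamma> (J' *v X) (J' *v Y) + \<eta> (J' *v X) (J' *v Y)) = 0"
  shows "2 * \<i> * Tf J (F11 J \<gamma>) (J' *v X - J *v X) Y - 2 * \<i> * Tf J (F11 J \<gamma>) (J' *v Y - J *v Y) X
     - \<gamma> (J' *v X - J *v X) (J' *v Y - J *v Y)
     + (\<eta> X Y + \<i> * \<eta> (J' *v X) Y + \<i> * \<eta> X (J' *v Y) - \<eta> (J' *v X) (J' *v Y)) = 0"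
proof -
  define DX where "DX = J' *v X - J *v X"
  define DY where "DY = J' *v Y - J *v Y"
  have X: "J' *v X = J *v X + DX" and Y: "J' *v Y = J *v Y + DY" by (simp_all add: DX_def DY_def)
  have m1: "\<i> * \<gamma> DX Y - \<gamma> DX (J *v Y) = 2 * \<i> * Tf J (F11 J \<gamma>) DX Y" by (rule M_id[OF J bg f02])
  have m2: "\<i> * \<gamma> DY X - \<gamma> DY (J *v X) = 2 * \<i> * Tf J (F11 J \<gamma>) DY X" by (rule M_id[OF J bg f02])
  have f: "\<gamma> X Y + \<i> * \<gamma> (J *v X) Y + \<i> * \<gamma> X (J *v Y) - \<gamma> (J *v X) (J *v Y) = 0"
    using f02[of X Y] by (simp add: F02_def)
  have a1: "\<gamma> X DY = - \<gamma> DY X" and a2: "\<gamma> (J *v X) DY = - \<gamma> DY (J *v X)" by (rule alt)+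
  have e: "\<gamma> X Y + \<eta> X Y + \<i> * (\<gamma> (J *v X) Y + \<gamma> DX Y + \<eta> (J' *v X) Y) + \<i> * (\<gamma> X (J *v Y) + \<gamma> X DY + \<eta> X (J' *v Y))
       - (\<gamma> (J *v X) (J *v Y) + \<gamma> (J *v X) DY + \<gamma> DX (J *v Y) + \<gamma> DX DY + \<eta> (J' *v X) (J' *v Y)) = 0"
    using eq unfolding X Y by (simp add: bil_add1[OF bg] bil_add2[OF bg] algebra_simps)
  have f': "\<gamma> (J *v X) (J *v Y) = \<gamma> X Y + \<i> * \<gamma> (J *v X) Y + \<i> * \<gamma> X (J *v Y)"
    using f by (simp add: algebra_simps)
  have "2 * \<i> * Tf J (F11 J \<gamma>) DX Y - 2 * \<i> * Tf J (F11 J \<gamma>) DY X - \<gamma> DX DY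
     + (\<eta> X Y + \<i> * \<eta> (J' *v X) Y + \<i> * \<eta> X (J' *v Y) - \<eta> (J' *v X) (J' *v Y)) =
     \<gamma> X Y + \<eta> X Y + \<i> * (\<gamma> (J *v X) Y + \<gamma> DX Y + \<eta> (J' *v X) Y) + \<i> * (\<gamma> X (J *v Y) + \<gamma> X DY + \<eta> X (J' *v Y))
       - (\<gamma> (J *v X) (J *v Y) + \<gamma> (J *v X) DY + \<gamma> DX (J *v Y) + \<gamma> DX DY + \<eta> (J' *v X) (J' *v Y))"
    unfolding m1[symmetric] m2[symmetric] f' a1 a2 by (simp add: algebra_simps)
  with e show ?thesis unfolding DX_def DY_def by simp
qed



lemma nhds_to_at: "eventually P (nhds (0::real)) \<Longrightarrow> eventually P (at 0)"
  by (auto simp: eventually_at_filter elim: eventually_mono)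

lemma quot:
  fixes f :: "real \<Rightarrow> 'a::real_normed_vector"
  assumes d: "(f has_vector_derivative v) (at 0)" and f0: "f 0 = 0"
  shows "((\<lambda>t. f t /\<^sub>R t) \<longlongrightarrow> v) (at 0)"
proof -
  have "((\<lambda>h. norm (f (0 + h) - f 0 - h *\<^sub>R v) / norm h) \<longlongrightarrow> 0) (at 0)"
    using d by (simp add: has_vector_derivative_def has_derivative_at)
  then have "((\<lambda>h. norm (f h /\<^sub>R h - v)) \<longlongrightarrow> 0) (at 0)"
  proof (rule Lim_transform_eventually)
    show "\<forall>\<^sub>F h in at 0. norm (f (0 + h) - f 0 - h *\<^sub>R v) / norm h = norm (f h /\<^sub>R h - v)"
    proof (rule eventually_mono[OF eventually_neq_at_within[of 0 0 UNIV]])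
      fix h :: real assume h: "h \<noteq> 0"
      have "f h /\<^sub>R h - v = inverse h *\<^sub>R (f h - h *\<^sub>R v)" using h by (simp add: algebra_simps)
      then show "norm (f (0 + h) - f 0 - h *\<^sub>R v) / norm h = norm (f h /\<^sub>R h - v)"
        using f0 by (simp add: divide_inverse mult.commute)
    qed
  qed
  then show ?thesis by (simp add: tendsto_norm_zero_iff LIM_zero_iff)
qed

lemma cont0:
  fixes f :: "real \<Rightarrow> 'a::real_normed_vector"
  assumes d: "(f has_vector_derivative v) (at 0)" and f0: "f 0 = 0"
  shows "(f \<longlongrightarrow> 0) (at 0)"
  using has_vector_derivative_continuous[OF d] f0 by (simp add: isCont_def)

lemma deriv_eq:
  assumes "(f has_vector_derivative a) (at 0)" "(g has_vector_derivative b) (at 0)"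
    "eventually (\<lambda>t. f t = g t) (at 0)" "f 0 = g 0"
  shows "a = b"
proof -
  have "(g has_vector_derivative a) (at 0)"
    using has_derivative_transform_eventually[of f "\<lambda>x. x *\<^sub>R a" 0 UNIV g] assms
    by (simp add: has_vector_derivative_def)
  then show ?thesis using assms(2) vector_derivative_unique_at by blast
qed

lemma bil2_expand:
  fixes f :: "real^'n \<Rightarrow> real^'n \<Rightarrow> 'b::real_vector"
  assumes "\<And>X. linear (f X)" "\<And>Y. linear (\<lambda>X. f X Y)"
  shows "f X Y = (\<Sum>i\<in>UNIV. \<Sum>j\<in>UNIV. (X$i * Y$j) *\<^sub>R f (axis i 1) (axis j 1))"
proof -
  have "f X Y = (\<Sum>i\<in>UNIV. X$i *\<^sub>R f (axis i 1) Y)"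
    using linear_expand[of "\<lambda>X. f X Y" X] assms by simp
  also have "\<dots> = (\<Sum>i\<in>UNIV. X$i *\<^sub>R (\<Sum>j\<in>UNIV. Y$j *\<^sub>R f (axis i 1) (axis j 1)))"
    using linear_expand[of "f (axis _ 1)" Y] assms by simp
  also have "\<dots> = (\<Sum>i\<in>UNIV. \<Sum>j\<in>UNIV. (X$i * Y$j) *\<^sub>R f (axis i 1) (axis j 1))"
    by (simp add: scaleR_sum_right)
  finally show ?thesis .
qed

lemma bil_tendsto:
  fixes f :: "real^'n \<Rightarrow> real^'n \<Rightarrow> 'b::real_normed_vector"
  assumes "\<And>X. linear (f X)" "\<And>Y. linear (\<lambda>X. f X Y)"
    and U: "(U \<longlongrightarrow> U0) F" and V: "(V \<longlongrightarrow> V0) F"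
  shows "((\<lambda>t. f (U t) (V t)) \<longlongrightarrow> f U0 V0) F"
proof -
  have 1: "(\<lambda>t. f (U t) (V t)) = (\<lambda>t. \<Sum>i\<in>UNIV. \<Sum>j\<in>UNIV. (U t$i * V t$j) *\<^sub>R f (axis i 1) (axis j 1))"
    by (rule ext) (rule bil2_expand[OF assms(1,2)])
  have 2: "f U0 V0 = (\<Sum>i\<in>UNIV. \<Sum>j\<in>UNIV. (U0$i * V0$j) *\<^sub>R f (axis i 1) (axis j 1))"
    by (rule bil2_expand[OF assms(1,2)])
  show ?thesis unfolding 1 2 by (intro tendsto_intros U V)
qed

lemma BL:
  fixes \<beta> :: "real \<Rightarrow> ('n::finite) form1"
  assumes ev: "\<forall>\<^sub>F t in at 0. linear (\<beta> t)"
    and der: "\<And>x. ((\<lambda>t. \<beta> t x) has_vector_derivative \<theta> x) (at 0)"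
    and b0: "\<And>x. \<beta> 0 x = 0"
    and lin: "linear \<theta>"
    and V: "(V \<longlongrightarrow> V0) (at 0)"
  shows "((\<lambda>t. \<beta> t (V t) /\<^sub>R t) \<longlongrightarrow> \<theta> V0) (at 0)"
proof -
  have q: "((\<lambda>t. \<beta> t (axis i 1) /\<^sub>R t) \<longlongrightarrow> \<theta> (axis i 1)) (at 0)" for i
    by (rule quot[OF der b0])
  have lim: "((\<lambda>t. \<Sum>i\<in>UNIV. (V t $ i) *\<^sub>R (\<beta> t (axis i 1) /\<^sub>R t)) \<longlongrightarrow>
      (\<Sum>i\<in>UNIV. V0 $ i *\<^sub>R \<theta> (axis i 1))) (at 0)"
    by (intro tendsto_intros q V)
  have eq: "\<theta> V0 = (\<Sum>i\<in>UNIV. V0 $ i *\<^sub>R \<theta> (axis i 1))" by (rule linear_expand[OF lin])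
  have "\<forall>\<^sub>F t in at 0. (\<Sum>i\<in>UNIV. (V t $ i) *\<^sub>R (\<beta> t (axis i 1) /\<^sub>R t)) = \<beta> t (V t) /\<^sub>R t"
  proof (rule eventually_mono[OF ev])
    fix t assume l: "linear (\<beta> t)"
    show "(\<Sum>i\<in>UNIV. (V t $ i) *\<^sub>R (\<beta> t (axis i 1) /\<^sub>R t)) = \<beta> t (V t) /\<^sub>R t"
      unfolding linear_expand[OF l, of "V t"] by (simp add: scaleR_sum_right mult.commute)
  qed
  with lim show ?thesis unfolding eq[symmetric] by (rule Lim_transform_eventually)
qed



lemma norm_lin_le:
  fixes b :: "('n::finite) form1"
  assumes "linear b"
  shows "cmod (b V) \<le> (\<Sum>i\<in>UNIV. \<bar>V$i\<bar> * cmod (b (axis i 1)))"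
proof -
  have "cmod (b V) = cmod (\<Sum>i\<in>UNIV. V$i *\<^sub>R b (axis i 1))" using linear_expand[OF assms, of V] by simp
  also have "\<dots> \<le> (\<Sum>i\<in>UNIV. cmod (V$i *\<^sub>R b (axis i 1)))" by (rule norm_sum)
  finally show ?thesis by simp
qed

lemma bound_fixed:
  fixes V X :: "real^'n::finite" and b :: "'n \<Rightarrow> 'n form1"
  assumes h1: "\<And>j. \<bar>V$j\<bar> \<le> 4 * cmod (b j X) + 2 * cmod (b j V)"
    and lin: "\<And>j. linear (b j)"
    and sm: "\<And>j i. cmod (b j (axis i 1)) \<le> 1 / (4 * real CARD('n))"
  shows "(\<Sum>j\<in>UNIV. \<bar>V$j\<bar>) \<le> 8 * (\<Sum>j\<in>UNIV. cmod (b j X))"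
proof -
  define S where "S = (\<Sum>j\<in>UNIV. \<bar>V$j\<bar>)"
  define C where "C = real CARD('n)"
  have C: "C > 0" by (simp add: C_def)
  have bv: "cmod (b j V) \<le> S / (4 * C)" for j
  proof -
    have "cmod (b j V) \<le> (\<Sum>i\<in>UNIV. \<bar>V$i\<bar> * cmod (b j (axis i 1)))" by (rule norm_lin_le[OF lin])
    also have "\<dots> \<le> (\<Sum>i\<in>UNIV. \<bar>V$i\<bar> * (1 / (4 * C)))"
      by (intro sum_mono mult_left_mono) (use sm in \<open>auto simp: C_def\<close>)
    also have "\<dots> = S / (4 * C)" by (simp add: S_def sum_divide_distrib)
    finally show ?thesis .
  qed
  have "S \<le> (\<Sum>j\<in>UNIV. 4 * cmod (b j X) + S / (2 * C))"
    unfolding S_def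
  proof (rule sum_mono)
    fix j show "\<bar>V$j\<bar> \<le> 4 * cmod (b j X) + (\<Sum>j\<in>UNIV. \<bar>V$j\<bar>) / (2 * C)"
      using h1[of j] bv[of j] by (simp add: S_def)
  qed
  also have "\<dots> = 4 * (\<Sum>j\<in>UNIV. cmod (b j X)) + S / 2"
    using C by (simp add: sum.distrib sum_distrib_left C_def)
  finally show ?thesis by (simp add: S_def)
qed

lemma Re_pf: "Re (pf J j V) = V$j / 2" by (simp add: pf_def)

lemma Dsmall:
  fixes Jt :: "real \<Rightarrow> real^'n::finite^'n" and B :: "'n \<Rightarrow> real \<Rightarrow> 'n form1"
  assumes J: "J \<in> acs"
    and lift: "\<And>j. \<forall>\<^sub>F t in at 0. B j t \<in> L01 J \<and> (\<lambda>x. pf J j x + B j t x) \<in> L10 (Jt t)"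
    and der: "\<And>j x. ((\<lambda>t. B j t x) has_vector_derivative d j x) (at 0)"
    and B0: "\<And>j x. B j 0 x = 0"
  shows "((\<lambda>t. Jt t *v X - J *v X) \<longlongrightarrow> 0) (at 0)"
proof -
  define C where "C = real CARD('n)"
  have C: "C > 0" by (simp add: C_def)
  have c: "((\<lambda>t. B j t x) \<longlongrightarrow> 0) (at 0)" for j x by (rule cont0[OF der B0])
  have ev1: "\<forall>\<^sub>F t in at 0. \<forall>j. B j t \<in> L01 J \<and> (\<lambda>x. pf J j x + B j t x) \<in> L10 (Jt t)"
    by (rule eventually_all_finite) (rule lift)
  have ev2: "\<forall>\<^sub>F t in at 0. \<forall>j i. cmod (B j t (axis i 1)) \<le> 1 / (4 * C)"
  proof (intro eventually_all_finite)
    fix j i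
    have "((\<lambda>t. cmod (B j t (axis i 1))) \<longlongrightarrow> 0) (at 0)" using tendsto_norm[OF c[of j "axis i 1"]] by simp
    from order_tendstoD(2)[OF this, of "1 / (4 * C)"] C
    show "\<forall>\<^sub>F t in at 0. cmod (B j t (axis i 1)) \<le> 1 / (4 * C)" by (auto elim: eventually_mono)
  qed
  have ev: "\<forall>\<^sub>F t in at 0. norm (Jt t *v X - J *v X) \<le> 8 * (\<Sum>j\<in>UNIV. cmod (B j t X))"
  proof (rule eventually_mono[OF eventually_conj[OF ev1 ev2]])
    fix t assume a: "(\<forall>j. B j t \<in> L01 J \<and> (\<lambda>x. pf J j x + B j t x) \<in> L10 (Jt t)) \<and>
       (\<forall>j i. cmod (B j t (axis i 1)) \<le> 1 / (4 * C))"
    define V where "V = Jt t *v X - J *v X"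
    have h1: "\<bar>V$j\<bar> \<le> 4 * cmod (B j t X) + 2 * cmod (B j t V)" for j
    proof -
      have k: "pf J j V = 2 * \<i> * B j t X - B j t V"
        unfolding V_def by (rule K1[OF pf_L10[OF J]]) (use a in auto)
      have "\<bar>V$j\<bar> = 2 * \<bar>Re (pf J j V)\<bar>" by (simp add: Re_pf)
      also have "\<dots> \<le> 2 * cmod (pf J j V)" by (simp add: abs_Re_le_cmod)
      also have "\<dots> \<le> 2 * (cmod (2 * \<i> * B j t X) + cmod (B j t V))"
        unfolding k using norm_triangle_ineq4[of "2 * \<i> * B j t X" "B j t V"] by simp
      also have "\<dots> = 4 * cmod (B j t X) + 2 * cmod (B j t V)" by (simp add: norm_mult)
      finally show ?thesis .
    qed
    have "norm V \<le> (\<Sum>j\<in>UNIV. \<bar>V$j\<bar>)" by (rule norm_le_l1_cart)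
    also have "\<dots> \<le> 8 * (\<Sum>j\<in>UNIV. cmod (B j t X))"
      by (rule bound_fixed[OF h1]) (use a in \<open>auto simp: L01_def C_def\<close>)
    finally show "norm (Jt t *v X - J *v X) \<le> 8 * (\<Sum>j\<in>UNIV. cmod (B j t X))" by (simp add: V_def)
  qed
  have "((\<lambda>t. 8 * (\<Sum>j\<in>UNIV. cmod (B j t X))) \<longlongrightarrow> 8 * (\<Sum>j\<in>(UNIV::'n set). cmod 0)) (at 0)"
    by (intro tendsto_intros c)
  then have "((\<lambda>t. 8 * (\<Sum>j\<in>UNIV. cmod (B j t X))) \<longlongrightarrow> 0) (at 0)" by simp
  from Lim_null_comparison[OF ev this] show ?thesis .
qed

lemma Uniq:
  fixes Jt :: "real \<Rightarrow> real^'n::finite^'n"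
  assumes Dz: "\<And>X. ((\<lambda>t. Jt t *v X - J *v X) \<longlongrightarrow> 0) (at 0)"
  shows "\<forall>\<^sub>F t in at 0. \<forall>\<delta>. \<delta> \<in> L01 J \<and> \<delta> \<in> L10 (Jt t) \<longrightarrow> \<delta> = (\<lambda>x. 0)"
proof -
  define C where "C = real CARD('n)"
  have C: "C > 0" by (simp add: C_def)
  have ev: "\<forall>\<^sub>F t in at 0. \<forall>k i. \<bar>(Jt t *v axis k 1 - J *v axis k 1) $ i\<bar> \<le> 1 / C"
  proof (intro eventually_all_finite)
    fix k i
    have "((\<lambda>t. \<bar>(Jt t *v axis k 1 - J *v axis k 1) $ i\<bar>) \<longlongrightarrow> 0) (at 0)"
      using tendsto_rabs[OF tendsto_vec_nth[OF Dz[of "axis k 1"], of i]] by simp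
    from order_tendstoD(2)[OF this, of "1 / C"] C
    show "\<forall>\<^sub>F t in at 0. \<bar>(Jt t *v axis k 1 - J *v axis k 1) $ i\<bar> \<le> 1 / C" by (auto elim: eventually_mono)
  qed
  show ?thesis
  proof (rule eventually_mono[OF ev], intro allI impI)
    fix t and \<delta> :: "'n form1"
    assume sm: "\<forall>k i. \<bar>(Jt t *v axis k 1 - J *v axis k 1) $ i\<bar> \<le> 1 / C"
      and d: "\<delta> \<in> L01 J \<and> \<delta> \<in> L10 (Jt t)"
    have lin: "linear \<delta>" using d by (simp add: L01_def)
    define S where "S = (\<Sum>i\<in>UNIV. cmod (\<delta> (axis i 1)))"
    have k: "2 * cmod (\<delta> (axis k 1)) \<le> S / C" for k
    proof -
      have "2 * cmod (\<delta> (axis k 1)) = cmod (\<delta> (Jt t *v axis k 1 - J *v axis k 1))"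
        using Uq[of \<delta> J "Jt t" "axis k 1"] d by (simp add: norm_mult)
      also have "\<dots> \<le> (\<Sum>i\<in>UNIV. \<bar>(Jt t *v axis k 1 - J *v axis k 1) $ i\<bar> * cmod (\<delta> (axis i 1)))"
        by (rule norm_lin_le[OF lin])
      also have "\<dots> \<le> (\<Sum>i\<in>UNIV. (1 / C) * cmod (\<delta> (axis i 1)))"
        by (intro sum_mono mult_right_mono) (use sm in auto)
      also have "\<dots> = S / C" by (simp add: S_def sum_divide_distrib)
      finally show ?thesis .
    qed
    have "2 * S \<le> (\<Sum>k\<in>(UNIV::'n set). S / C)"
      unfolding S_def sum_distrib_left by (rule sum_mono) (use k in \<open>simp add: S_def\<close>)
    also have "\<dots> = S" using C by (simp add: C_def)
    finally have "S \<le> 0" by simp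
    then have z: "cmod (\<delta> (axis i 1)) = 0" for i
    proof -
      have "S = 0" using \<open>S \<le> 0\<close> unfolding S_def by (simp add: sum_nonneg antisym)
      then show ?thesis
        using sum_nonneg_eq_0_iff[of UNIV "\<lambda>i. cmod (\<delta> (axis i 1))"] unfolding S_def by simp
    qed
    show "\<delta> = (\<lambda>x. 0)"
    proof
      fix x show "\<delta> x = 0" using linear_expand[OF lin, of x] z by simp
    qed
  qed
qed



lemma der_L01:
  fixes \<beta> :: "real \<Rightarrow> ('n::finite) form1"
  assumes ev: "\<forall>\<^sub>F t in at 0. \<beta> t \<in> L01 J" and b0: "\<And>x. \<beta> 0 x = 0"
    and der: "\<And>x. ((\<lambda>t. \<beta> t x) has_vector_derivative \<theta> x) (at 0)"
  shows "\<theta> \<in> L01 J"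
proof -
  have add: "\<theta> (x + y) = \<theta> x + \<theta> y" for x y
  proof (rule deriv_eq[OF der has_vector_derivative_add[OF der der]])
    show "\<forall>\<^sub>F t in at 0. \<beta> t (x + y) = \<beta> t x + \<beta> t y"
      using ev by (auto elim!: eventually_mono simp: L01_def linear_add)
  qed (simp add: b0)
  have sc: "\<theta> (r *\<^sub>R x) = r *\<^sub>R \<theta> x" for r x
  proof -
    have "\<theta> (r *\<^sub>R x) = complex_of_real r * \<theta> x"
    proof (rule deriv_eq[OF der has_vector_derivative_mult_right[OF der]])
      show "\<forall>\<^sub>F t in at 0. \<beta> t (r *\<^sub>R x) = complex_of_real r * \<beta> t x"
        using ev by (auto elim!: eventually_mono simp: L01_def linear_scale scaleR_c)
    qed (simp add: b0)
    then show ?thesis by (simp add: scaleR_c)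
  qed
  have j: "\<theta> (J *v x) = - \<i> * \<theta> x" for x
  proof (rule deriv_eq[OF der has_vector_derivative_mult_right[OF der]])
    show "\<forall>\<^sub>F t in at 0. \<beta> t (J *v x) = - \<i> * \<beta> t x"
      using ev by (auto elim!: eventually_mono simp: L01_def)
  qed (simp add: b0)
  show ?thesis unfolding L01_def using add sc j by (simp add: linear_iff)
qed

definition lift_ok :: "real^'n^'n \<Rightarrow> (real \<Rightarrow> real^'n^'n) \<Rightarrow> (('n::finite) form1 \<Rightarrow> 'n form1) \<Rightarrow>
    ('n form1 \<Rightarrow> real \<Rightarrow> 'n form1) \<Rightarrow> bool" where
  "lift_ok J Jt \<theta> Bf \<longleftrightarrow> (\<forall>\<psi>\<in>L10 J.
      (\<forall>\<^sub>F t in at 0. Bf \<psi> t \<in> L01 J \<and> (\<lambda>x. \<psi> x + Bf \<psi> t x) \<in> L10 (Jt t)) \<and>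
      (\<forall>x. Bf \<psi> 0 x = 0) \<and> (\<forall>x. ((\<lambda>t. Bf \<psi> t x) has_vector_derivative \<theta> \<psi> x) (at 0)))"

lemma hom:
  fixes Jt :: "real \<Rightarrow> real^'n::finite^'n"
  assumes J: "J \<in> acs"
    and U: "\<forall>\<^sub>F t in at 0. \<forall>\<delta>. \<delta> \<in> L01 J \<and> \<delta> \<in> L10 (Jt t) \<longrightarrow> \<delta> = (\<lambda>x. 0)"
    and L: "lift_ok J Jt \<theta> Bf"
  shows "is_hom J \<theta>"
proof -
  have Lp: "\<And>\<psi>. \<psi> \<in> L10 J \<Longrightarrow> (\<forall>\<^sub>F t in at 0. Bf \<psi> t \<in> L01 J \<and> (\<lambda>x. \<psi> x + Bf \<psi> t x) \<in> L10 (Jt t))"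
    "\<And>\<psi> x. \<psi> \<in> L10 J \<Longrightarrow> Bf \<psi> 0 x = 0"
    "\<And>\<psi> x. \<psi> \<in> L10 J \<Longrightarrow> ((\<lambda>t. Bf \<psi> t x) has_vector_derivative \<theta> \<psi> x) (at 0)"
    using L unfolding lift_ok_def by blast+
  have h1: "\<theta> \<psi> \<in> L01 J" if "\<psi> \<in> L10 J" for \<psi>
    by (rule der_L01[of "Bf \<psi>"]) (use Lp[OF that] in \<open>auto elim: eventually_mono\<close>)
  have h2: "\<theta> (\<lambda>x. \<omega> x + \<omega>' x) = (\<lambda>x. \<theta> \<omega> x + \<theta> \<omega>' x)" if w: "\<omega> \<in> L10 J" "\<omega>' \<in> L10 J" for \<omega> \<omega>'
  proof
    fix x
    define w3 where "w3 = (\<lambda>x. \<omega> x + \<omega>' x)"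
    have w3: "w3 \<in> L10 J" using L10_add[OF w] by (simp add: w3_def)
    have ev: "\<forall>\<^sub>F t in at 0. Bf w3 t x = Bf \<omega> t x + Bf \<omega>' t x"
    proof (rule eventually_mono[OF eventually_conj[OF U eventually_conj[OF Lp(1)[OF w3] eventually_conj[OF Lp(1)[OF w(1)] Lp(1)[OF w(2)]]]]])
      fix t assume a: "(\<forall>\<delta>. \<delta> \<in> L01 J \<and> \<delta> \<in> L10 (Jt t) \<longrightarrow> \<delta> = (\<lambda>x. 0)) \<and>
        (Bf w3 t \<in> L01 J \<and> (\<lambda>x. w3 x + Bf w3 t x) \<in> L10 (Jt t)) \<and>
        (Bf \<omega> t \<in> L01 J \<and> (\<lambda>x. \<omega> x + Bf \<omega> t x) \<in> L10 (Jt t)) \<and>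
        (Bf \<omega>' t \<in> L01 J \<and> (\<lambda>x. \<omega>' x + Bf \<omega>' t x) \<in> L10 (Jt t))"
      define \<delta> where "\<delta> = (\<lambda>x. Bf w3 t x - (Bf \<omega> t x + Bf \<omega>' t x))"
      have "\<delta> \<in> L01 J" unfolding \<delta>_def using a by (intro L01_diff L01_add) auto
      moreover have "\<delta> \<in> L10 (Jt t)"
      proof -
        have m: "(\<lambda>x. w3 x + Bf w3 t x) \<in> L10 (Jt t)" "(\<lambda>x. \<omega> x + Bf \<omega> t x) \<in> L10 (Jt t)"
          "(\<lambda>x. \<omega>' x + Bf \<omega>' t x) \<in> L10 (Jt t)" using a by auto
        have "(\<lambda>x. (w3 x + Bf w3 t x) - ((\<omega> x + Bf \<omega> t x) + (\<omega>' x + Bf \<omega>' t x))) \<in> L10 (Jt t)"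
          using L10_diff[OF m(1) L10_add[OF m(2) m(3)]] by simp
        moreover have "(\<lambda>x. (w3 x + Bf w3 t x) - ((\<omega> x + Bf \<omega> t x) + (\<omega>' x + Bf \<omega>' t x))) = \<delta>"
          by (auto simp: \<delta>_def w3_def fun_eq_iff algebra_simps)
        ultimately show ?thesis by simp
      qed
      ultimately have "\<delta> = (\<lambda>x. 0)" using a by blast
      then show "Bf w3 t x = Bf \<omega> t x + Bf \<omega>' t x" unfolding \<delta>_def by (metis eq_iff_diff_eq_0)
    qed
    have "\<theta> w3 x = \<theta> \<omega> x + \<theta> \<omega>' x"
      by (rule deriv_eq[OF Lp(3)[OF w3] has_vector_derivative_add[OF Lp(3)[OF w(1)] Lp(3)[OF w(2)]] ev])
        (simp add: Lp(2) w w3)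
    then show "\<theta> (\<lambda>x. \<omega> x + \<omega>' x) x = \<theta> \<omega> x + \<theta> \<omega>' x" by (simp add: w3_def)
  qed
  have h3: "\<theta> (\<lambda>x. c * \<omega> x) = (\<lambda>x. c * \<theta> \<omega> x)" if w: "\<omega> \<in> L10 J" for \<omega> c
  proof
    fix x
    define w3 where "w3 = (\<lambda>x. c * \<omega> x)"
    have w3: "w3 \<in> L10 J" using L10_cmul[OF w] by (simp add: w3_def)
    have ev: "\<forall>\<^sub>F t in at 0. Bf w3 t x = c * Bf \<omega> t x"
    proof (rule eventually_mono[OF eventually_conj[OF U eventually_conj[OF Lp(1)[OF w3] Lp(1)[OF w]]]])
      fix t assume a: "(\<forall>\<delta>. \<delta> \<in> L01 J \<and> \<delta> \<in> L10 (Jt t) \<longrightarrow> \<delta> = (\<lambda>x. 0)) \<and>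
        (Bf w3 t \<in> L01 J \<and> (\<lambda>x. w3 x + Bf w3 t x) \<in> L10 (Jt t)) \<and>
        (Bf \<omega> t \<in> L01 J \<and> (\<lambda>x. \<omega> x + Bf \<omega> t x) \<in> L10 (Jt t))"
      define \<delta> where "\<delta> = (\<lambda>x. Bf w3 t x - c * Bf \<omega> t x)"
      have "\<delta> \<in> L01 J" unfolding \<delta>_def using a by (intro L01_diff L01_cmul) auto
      moreover have "\<delta> \<in> L10 (Jt t)"
      proof -
        have m: "(\<lambda>x. w3 x + Bf w3 t x) \<in> L10 (Jt t)" "(\<lambda>x. \<omega> x + Bf \<omega> t x) \<in> L10 (Jt t)"
          using a by auto
        have "(\<lambda>x. (w3 x + Bf w3 t x) - c * (\<omega> x + Bf \<omega> t x)) \<in> L10 (Jt t)"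
          using L10_diff[OF m(1) L10_cmul[OF m(2)]] by simp
        moreover have "(\<lambda>x. (w3 x + Bf w3 t x) - c * (\<omega> x + Bf \<omega> t x)) = \<delta>"
          by (auto simp: \<delta>_def w3_def fun_eq_iff algebra_simps)
        ultimately show ?thesis by simp
      qed
      ultimately have "\<delta> = (\<lambda>x. 0)" using a by blast
      then show "Bf w3 t x = c * Bf \<omega> t x" unfolding \<delta>_def by (metis eq_iff_diff_eq_0)
    qed
    have "\<theta> w3 x = c * \<theta> \<omega> x"
      by (rule deriv_eq[OF Lp(3)[OF w3] has_vector_derivative_mult_right[OF Lp(3)[OF w]] ev])
        (simp add: Lp(2) w w3)
    then show "\<theta> (\<lambda>x. c * \<omega> x) x = c * \<theta> \<omega> x" by (simp add: w3_def)
  qed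
  show ?thesis unfolding is_hom_def using h1 h2 h3 by blast
qed



lemma K3:
  fixes Jt :: "real \<Rightarrow> real^'n::finite^'n"
  assumes Dz: "\<And>X. ((\<lambda>t. Jt t *v X - J *v X) \<longlongrightarrow> 0) (at 0)"
    and L: "lift_ok J Jt \<theta> Bf" and hom: "is_hom J \<theta>" and psi: "\<psi> \<in> L10 J"
  shows "((\<lambda>t. \<psi> (Jt t *v X - J *v X) /\<^sub>R t) \<longlongrightarrow> 2 * \<i> * \<theta> \<psi> X) (at 0)"
proof -
  have Lp: "\<forall>\<^sub>F t in at 0. Bf \<psi> t \<in> L01 J \<and> (\<lambda>x. \<psi> x + Bf \<psi> t x) \<in> L10 (Jt t)"
    "\<And>x. Bf \<psi> 0 x = 0" "\<And>x. ((\<lambda>t. Bf \<psi> t x) has_vector_derivative \<theta> \<psi> x) (at 0)"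
    using L psi unfolding lift_ok_def by blast+
  have lin: "linear (\<theta> \<psi>)" using hom psi by (simp add: is_hom_def L01_def)
  have evl: "\<forall>\<^sub>F t in at 0. linear (Bf \<psi> t)" using Lp(1) by (auto elim: eventually_mono simp: L01_def)
  have b1: "((\<lambda>t. Bf \<psi> t X /\<^sub>R t) \<longlongrightarrow> \<theta> \<psi> X) (at 0)" by (rule quot[OF Lp(3) Lp(2)])
  have b2: "((\<lambda>t. Bf \<psi> t (Jt t *v X - J *v X) /\<^sub>R t) \<longlongrightarrow> \<theta> \<psi> 0) (at 0)"
    by (rule BL[OF evl Lp(3) Lp(2) lin Dz])
  have "((\<lambda>t. 2 * \<i> * (Bf \<psi> t X /\<^sub>R t) - Bf \<psi> t (Jt t *v X - J *v X) /\<^sub>R t) \<longlongrightarrow> 2 * \<i> * \<theta> \<psi> X - \<theta> \<psi> 0) (at 0)"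
    by (intro tendsto_intros b1 b2)
  then have lim: "((\<lambda>t. 2 * \<i> * (Bf \<psi> t X /\<^sub>R t) - Bf \<psi> t (Jt t *v X - J *v X) /\<^sub>R t) \<longlongrightarrow> 2 * \<i> * \<theta> \<psi> X) (at 0)"
    using linear_0[OF lin] by simp
  show ?thesis
  proof (rule Lim_transform_eventually[OF lim])
    show "\<forall>\<^sub>F t in at 0. 2 * \<i> * (Bf \<psi> t X /\<^sub>R t) - Bf \<psi> t (Jt t *v X - J *v X) /\<^sub>R t = \<psi> (Jt t *v X - J *v X) /\<^sub>R t"
    proof (rule eventually_mono[OF Lp(1)])
      fix t assume a: "Bf \<psi> t \<in> L01 J \<and> (\<lambda>x. \<psi> x + Bf \<psi> t x) \<in> L10 (Jt t)"
      have h: "\<psi> (Jt t *v X - J *v X) = 2 * \<i> * Bf \<psi> t X - Bf \<psi> t (Jt t *v X - J *v X)"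
        by (rule K1[OF psi]) (use a in auto)
      show "2 * \<i> * (Bf \<psi> t X /\<^sub>R t) - Bf \<psi> t (Jt t *v X - J *v X) /\<^sub>R t = \<psi> (Jt t *v X - J *v X) /\<^sub>R t"
        unfolding h by (simp only: scaleR_right_diff_distrib mult_scaleR_right)
    qed
  qed
qed

lemma Elim:
  fixes Jt :: "real \<Rightarrow> real^'n::finite^'n"
  assumes J: "J \<in> acs" and Dz: "\<And>X. ((\<lambda>t. Jt t *v X - J *v X) \<longlongrightarrow> 0) (at 0)"
    and L: "lift_ok J Jt \<theta> Bf" and hom: "is_hom J \<theta>"
  shows "((\<lambda>t. (Jt t *v X - J *v X) /\<^sub>R t) \<longlongrightarrow> (\<chi> j. 2 * Re (2 * \<i> * \<theta> (pf J j) X))) (at 0)"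
proof (rule vec_tendstoI)
  fix j
  have "((\<lambda>t. 2 * Re (pf J j (Jt t *v X - J *v X) /\<^sub>R t)) \<longlongrightarrow> 2 * Re (2 * \<i> * \<theta> (pf J j) X)) (at 0)"
    by (intro tendsto_intros K3[OF Dz L hom pf_L10[OF J]])
  moreover have e: "((Jt t *v X - J *v X) /\<^sub>R t) $ j = 2 * Re (pf J j (Jt t *v X - J *v X) /\<^sub>R t)" for t
    by (simp only: vector_scaleR_component scaleR_complex.sel Re_pf) simp
  ultimately show "((\<lambda>t. ((Jt t *v X - J *v X) /\<^sub>R t) $ j) \<longlongrightarrow> (\<chi> j. 2 * Re (2 * \<i> * \<theta> (pf J j) X)) $ j) (at 0)"
    by (simp only: e vec_lambda_beta)
qed



lemma br_lin:
  assumes "lie_bracket br"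
  shows "\<And>X. linear (br X)" "\<And>Y. linear (\<lambda>X. br X Y)"
  using assms unfolding lie_bracket_def by blast+

lemma fin_alg:
  fixes p q a b c d :: complex
  assumes "2 * \<i> * (2 * \<i> * p) - 2 * \<i> * (2 * \<i> * q) - 0 + (- a - \<i> * b - \<i> * c + d) = 0"
  shows "(- a - \<i> * b - \<i> * c + d) / 4 = p - q"
proof -
  have e: "2 * \<i> * (2 * \<i> * z) = - 4 * z" for z :: complex
    by (simp add: mult.assoc[symmetric])
  have "- a - \<i> * b - \<i> * c + d = 4 * p - 4 * q" using assms unfolding e by (simp add: algebra_simps)
  then show ?thesis by simp
qed

lemma main_limit:
  fixes Jt :: "real \<Rightarrow> real^'n::finite^'n"
  assumes lie: "lie_bracket br" and JC: "J \<in> Cg br" and C: "\<And>t. Jt t \<in> Cg br"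
    and Dz: "\<And>X. ((\<lambda>t. Jt t *v X - J *v X) \<longlongrightarrow> 0) (at 0)"
    and L: "lift_ok J Jt \<theta> Bf" and hom: "is_hom J \<theta>" and w: "\<omega> \<in> L10 J"
  shows "F02 J (dform br (\<theta> \<omega>)) X Y = Th J \<theta> (F11 J (dform br \<omega>)) X Y"
proof -
  have J: "J \<in> acs" using JC by (simp add: Cg_def)
  define \<gamma> where "\<gamma> = dform br \<omega>"
  have bg: "bil \<gamma>" unfolding \<gamma>_def by (rule dform_bil(1)[OF lie L10_lin[OF w]])
  have alt: "\<And>X Y. \<gamma> X Y = - \<gamma> Y X" unfolding \<gamma>_def by (rule dform_bil(2)[OF lie L10_lin[OF w]])
  have f02: "\<And>X Y. F02 J \<gamma> X Y = 0" unfolding \<gamma>_def by (rule F02_zero[OF JC w])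
  define T where "T = Tf J (F11 J \<gamma>)"
  have psiL: "(\<lambda>Z. T Z W) \<in> L10 J" for W unfolding T_def by (rule Tf_L10[OF J bg])
  have Lp: "\<forall>\<^sub>F t in at 0. Bf \<omega> t \<in> L01 J \<and> (\<lambda>x. \<omega> x + Bf \<omega> t x) \<in> L10 (Jt t)"
    "\<And>x. Bf \<omega> 0 x = 0" "\<And>x. ((\<lambda>t. Bf \<omega> t x) has_vector_derivative \<theta> \<omega> x) (at 0)"
    using L w unfolding lift_ok_def by blast+
  have linw: "linear (\<theta> \<omega>)" using hom w by (simp add: is_hom_def L01_def)
  have evl: "\<forall>\<^sub>F t in at 0. linear (Bf \<omega> t)" using Lp(1) by (auto elim: eventually_mono simp: L01_def)
  define D where "D t V = Jt t *v V - J *v V" for t V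
  have JtV: "((\<lambda>t. Jt t *v V) \<longlongrightarrow> J *v V) (at 0)" for V
    using tendsto_add[OF Dz[of V] tendsto_const[of "J *v V"]] by simp
  note brl = br_lin[OF lie]
  have A1: "((\<lambda>t. T (D t X) Y /\<^sub>R t) \<longlongrightarrow> 2 * \<i> * \<theta> (\<lambda>Z. T Z Y) X) (at 0)"
    unfolding D_def by (rule K3[OF Dz L hom psiL])
  have A2: "((\<lambda>t. T (D t Y) X /\<^sub>R t) \<longlongrightarrow> 2 * \<i> * \<theta> (\<lambda>Z. T Z X) Y) (at 0)"
    unfolding D_def by (rule K3[OF Dz L hom psiL])
  have A3: "((\<lambda>t. \<gamma> (D t X /\<^sub>R t) (D t Y)) \<longlongrightarrow> 0) (at 0)"
  proof -
    have "((\<lambda>t. \<gamma> (D t X /\<^sub>R t) (D t Y)) \<longlongrightarrow> \<gamma> (\<chi> j. 2 * Re (2 * \<i> * \<theta> (pf J j) X)) 0) (at 0)"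
      unfolding D_def by (rule bil_tendsto[OF bilD1[OF bg] bilD2[OF bg] Elim[OF J Dz L hom] Dz])
    then show ?thesis using linear_0[OF bilD1[OF bg]] by simp
  qed
  have H1: "((\<lambda>t. Bf \<omega> t (br X Y) /\<^sub>R t) \<longlongrightarrow> \<theta> \<omega> (br X Y)) (at 0)"
    by (rule BL[OF evl Lp(3) Lp(2) linw tendsto_const])
  have H2: "((\<lambda>t. Bf \<omega> t (br (Jt t *v X) Y) /\<^sub>R t) \<longlongrightarrow> \<theta> \<omega> (br (J *v X) Y)) (at 0)"
    by (rule BL[OF evl Lp(3) Lp(2) linw bil_tendsto[OF brl JtV tendsto_const]])
  have H3: "((\<lambda>t. Bf \<omega> t (br X (Jt t *v Y)) /\<^sub>R t) \<longlongrightarrow> \<theta> \<omega> (br X (J *v Y))) (at 0)"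
    by (rule BL[OF evl Lp(3) Lp(2) linw bil_tendsto[OF brl tendsto_const JtV]])
  have H4: "((\<lambda>t. Bf \<omega> t (br (Jt t *v X) (Jt t *v Y)) /\<^sub>R t) \<longlongrightarrow> \<theta> \<omega> (br (J *v X) (J *v Y))) (at 0)"
    by (rule BL[OF evl Lp(3) Lp(2) linw bil_tendsto[OF brl JtV JtV]])
  define G where "G t = 2 * \<i> * (T (D t X) Y /\<^sub>R t) - 2 * \<i> * (T (D t Y) X /\<^sub>R t) - \<gamma> (D t X /\<^sub>R t) (D t Y)
     + (- (Bf \<omega> t (br X Y) /\<^sub>R t) - \<i> * (Bf \<omega> t (br (Jt t *v X) Y) /\<^sub>R t)
        - \<i> * (Bf \<omega> t (br X (Jt t *v Y)) /\<^sub>R t) + Bf \<omega> t (br (Jt t *v X) (Jt t *v Y)) /\<^sub>R t)" for t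
  have Glim: "(G \<longlongrightarrow> 2 * \<i> * (2 * \<i> * \<theta> (\<lambda>Z. T Z Y) X) - 2 * \<i> * (2 * \<i> * \<theta> (\<lambda>Z. T Z X) Y) - 0
     + (- \<theta> \<omega> (br X Y) - \<i> * \<theta> \<omega> (br (J *v X) Y) - \<i> * \<theta> \<omega> (br X (J *v Y)) + \<theta> \<omega> (br (J *v X) (J *v Y)))) (at 0)"
    unfolding G_def by (intro tendsto_intros A1 A2 A3 H1 H2 H3 H4)
  have Gz: "\<forall>\<^sub>F t in at 0. G t = 0"
  proof (rule eventually_mono[OF Lp(1)])
    fix t assume a: "Bf \<omega> t \<in> L01 J \<and> (\<lambda>x. \<omega> x + Bf \<omega> t x) \<in> L10 (Jt t)"
    define \<eta> where "\<eta> = dform br (Bf \<omega> t)"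
    have ie: "dform br (\<lambda>x. \<omega> x + Bf \<omega> t x) X Y + \<i> * dform br (\<lambda>x. \<omega> x + Bf \<omega> t x) (Jt t *v X) Y
       + \<i> * dform br (\<lambda>x. \<omega> x + Bf \<omega> t x) X (Jt t *v Y)
       - dform br (\<lambda>x. \<omega> x + Bf \<omega> t x) (Jt t *v X) (Jt t *v Y) = 0"
      by (rule integ_eq[OF C]) (use a in auto)
    have dsum: "dform br (\<lambda>x. \<omega> x + Bf \<omega> t x) U V = \<gamma> U V + \<eta> U V" for U V
      by (simp add: dform_def \<gamma>_def \<eta>_def)
    have m: "2 * \<i> * T (D t X) Y - 2 * \<i> * T (D t Y) X - \<gamma> (D t X) (D t Y)
       + (\<eta> X Y + \<i> * \<eta> (Jt t *v X) Y + \<i> * \<eta> X (Jt t *v Y) - \<eta> (Jt t *v X) (Jt t *v Y)) = 0"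
      unfolding T_def D_def by (rule main_id[OF J bg alt f02]) (use ie in \<open>simp only: dsum\<close>)
    have sc: "\<gamma> (D t X /\<^sub>R t) (D t Y) = \<gamma> (D t X) (D t Y) /\<^sub>R t"
      by (rule linear_scale[OF bilD2[OF bg]])
    have "G t = (2 * \<i> * T (D t X) Y - 2 * \<i> * T (D t Y) X - \<gamma> (D t X) (D t Y)
       + (\<eta> X Y + \<i> * \<eta> (Jt t *v X) Y + \<i> * \<eta> X (Jt t *v Y) - \<eta> (Jt t *v X) (Jt t *v Y))) /\<^sub>R t"
      unfolding G_def sc \<eta>_def dform_def
      by (simp only: scaleR_right_diff_distrib scaleR_right_distrib mult_scaleR_right scaleR_minus_right) simp
    then show "G t = 0" using m by simp
  qed
  have "2 * \<i> * (2 * \<i> * \<theta> (\<lambda>Z. T Z Y) X) - 2 * \<i> * (2 * \<i> * \<theta> (\<lambda>Z. T Z X) Y) - 0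
     + (- \<theta> \<omega> (br X Y) - \<i> * \<theta> \<omega> (br (J *v X) Y) - \<i> * \<theta> \<omega> (br X (J *v Y)) + \<theta> \<omega> (br (J *v X) (J *v Y))) = 0"
    using tendsto_unique[OF trivial_limit_at Glim tendsto_eventually[OF Gz]] .
  then have r: "(- \<theta> \<omega> (br X Y) - \<i> * \<theta> \<omega> (br (J *v X) Y) - \<i> * \<theta> \<omega> (br X (J *v Y)) + \<theta> \<omega> (br (J *v X) (J *v Y))) / 4
      = \<theta> (\<lambda>Z. T Z Y) X - \<theta> (\<lambda>Z. T Z X) Y"
    by (rule fin_alg)
  have l: "F02 J (dform br (\<theta> \<omega>)) X Y = (- \<theta> \<omega> (br X Y) - \<i> * \<theta> \<omega> (br (J *v X) Y) - \<i> * \<theta> \<omega> (br X (J *v Y)) + \<theta> \<omega> (br (J *v X) (J *v Y))) / 4"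
    by (simp add: F02_def dform_def)
  have rr: "Th J \<theta> (F11 J (dform br \<omega>)) X Y = \<theta> (\<lambda>Z. T Z Y) X - \<theta> (\<lambda>Z. T Z X) Y"
    by (simp add: Th_def T_def \<gamma>_def)
  show ?thesis unfolding l rr r ..
qed



theorem proposition4p2:
  fixes br :: "real^'n \<Rightarrow> real^'n \<Rightarrow> real^'n"
    and n :: nat
    and J :: "real^'n^'n"
  assumes "lie_bracket br"
    and "CARD('n) = 2 * n"
    and "smooth_point (Cg br) J"
  shows "tangent_space br J \<subseteq> Kspace br J"
proof
  fix \<theta> assume "\<theta> \<in> tangent_space br J"
  then obtain Jt :: "real \<Rightarrow> real^'n^'n" where Jt0: "Jt 0 = J" and C: "\<And>t. Jt t \<in> Cg br"
    and lifts: "\<forall>\<omega>\<in>L10 J. \<exists>\<beta> :: real \<Rightarrow> 'n form1.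
          (\<forall>\<^sub>F t in nhds 0. \<beta> t \<in> L01 J \<and> (\<lambda>x. \<omega> x + \<beta> t x) \<in> L10 (Jt t)) \<and>
          \<beta> 0 = (\<lambda>x. 0) \<and>
          (\<forall>x. ((\<lambda>t. \<beta> t x) has_vector_derivative \<theta> \<omega> x) (at 0))"
    unfolding tangent_space_def by blast
  from bchoice[OF lifts] obtain Bf where Bf: "\<forall>\<omega>\<in>L10 J.
          (\<forall>\<^sub>F t in nhds 0. Bf \<omega> t \<in> L01 J \<and> (\<lambda>x. \<omega> x + Bf \<omega> t x) \<in> L10 (Jt t)) \<and>
          Bf \<omega> 0 = (\<lambda>x. 0) \<and>
          (\<forall>x. ((\<lambda>t. Bf \<omega> t x) has_vector_derivative \<theta> \<omega> x) (at 0))" by blast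
  have L: "lift_ok J Jt \<theta> Bf"
    unfolding lift_ok_def using Bf by (auto intro: nhds_to_at)
  have JC: "J \<in> Cg br" using C[of 0] Jt0 by simp
  have J: "J \<in> acs" using JC by (simp add: Cg_def)
  have Lp: "\<And>\<psi>. \<psi> \<in> L10 J \<Longrightarrow> (\<forall>\<^sub>F t in at 0. Bf \<psi> t \<in> L01 J \<and> (\<lambda>x. \<psi> x + Bf \<psi> t x) \<in> L10 (Jt t))"
    "\<And>\<psi> x. \<psi> \<in> L10 J \<Longrightarrow> Bf \<psi> 0 x = 0"
    "\<And>\<psi> x. \<psi> \<in> L10 J \<Longrightarrow> ((\<lambda>t. Bf \<psi> t x) has_vector_derivative \<theta> \<psi> x) (at 0)"
    using L unfolding lift_ok_def by blast+
  have Dz: "((\<lambda>t. Jt t *v X - J *v X) \<longlongrightarrow> 0) (at 0)" for X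
    by (rule Dsmall[OF J, of "\<lambda>j. Bf (pf J j)"]) (auto intro: Lp pf_L10[OF J])
  have U: "\<forall>\<^sub>F t in at 0. \<forall>\<delta>. \<delta> \<in> L01 J \<and> \<delta> \<in> L10 (Jt t) \<longrightarrow> \<delta> = (\<lambda>x. 0)"
    by (rule Uniq[OF Dz])
  have hom: "is_hom J \<theta>" by (rule hom[OF J U L])
  have cl: "clin J \<theta>" using hom by (simp add: is_hom_def clin_def)
  have "dbar_hom br J \<theta> \<omega> = (\<lambda>X Y. 0)" if w: "\<omega> \<in> L10 J" for \<omega>
  proof -
    have lt: "linear (\<theta> \<omega>)" using hom w by (simp add: is_hom_def L01_def)
    have lw: "linear \<omega>" by (rule L10_lin[OF w])
    have e1: "dbar01 br J (\<theta> \<omega>) = F02 J (dform br (\<theta> \<omega>))"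
      unfolding dbar01_def by (rule comp02_eq[OF J dform_bil(1)[OF assms(1) lt] dform_bil(2)[OF assms(1) lt]])
    have e2: "dbar10 br J \<omega> = F11 J (dform br \<omega>)"
      unfolding dbar10_def by (rule comp11_eq(1)[OF J dform_bil(1)[OF assms(1) lw] dform_bil(2)[OF assms(1) lw]])
    have m: "F11 J (dform br \<omega>) \<in> L11 J"
      by (rule comp11_eq(2)[OF J dform_bil(1)[OF assms(1) lw] dform_bil(2)[OF assms(1) lw]])
    have e3: "theta11 J \<theta> (F11 J (dform br \<omega>)) = Th J \<theta> (F11 J (dform br \<omega>))"
      by (rule theta11_eq[OF J cl m])
    show ?thesis
      unfolding dbar_hom_def e1 e2 e3
      using main_limit[OF assms(1) JC C Dz L hom w] by simp
  qed
  then show "\<theta> \<in> Kspace br J" unfolding Kspace_def using hom by blast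
qed


end
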